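(* Let $\mathbf{X}^n=(x_1^n,x_2^n)$ be generated by the scheme with time step $\Delta t=1/N$ from a deterministic initial point $\mathbf{X}^0\in\mathbb{R}^2$. Then the second moment grows at most linearly: $$\sup_{n\ge1}\ \frac{\mathbb{E}\|\mathbf{X}^n\|^2}{n}<\infty.$$
   Context: Let $\sigma>0$. Let $H(t,x_1,x_2)=H_1(t,x_1)+H_2(t,x_2)$ be a smooth separable Hamiltonian, $1$-periodic in $t,x_1,x_2$, and set $v_1(t,x_2)=-\partial_{x_2}H$, $v_2(t,x_1)=\partial_{x_1}H$; assume $\int_0^1 v_1(t,x_2)\,\mathrm{d}x_2=0$ and $\int_0^1 v_2(t,x_1)\,\mathrm{d}x_1=0$ for all $t$. Let $N\in\mathbb{N}$, $\Delta t=1/N$, $t_{n+\frac12}=(n+\frac12)\Delta t$. The scheme is $$x_1^{n+1}=x_1^n+v_1(t_{n+\frac12},x_2^n)\Delta t+\sigma\sqrt{\Delta t}\,\xi_1^n,\quad x_2^{n+1}=x_2^n+v_2\big(t_{n+\frac12},x_1^n+v_1(t_{n+\frac12},x_2^n)\Delta t\big)\Delta t+\sigma\sqrt{\Delta t}\,\xi_2^n,$$ with $\xi_1^n,\xi_2^n$ i.i.d. $\mathcal{N}(0,1)$. *)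

theory Defs
  imports "HOL-Analysis.Analysis" "HOL-Probability.Probability"
begin

text \<open>Smoothness (C-infinity) of a function of two real variables (t, x), curried:
  there is a family of continuous functions D i j (playing the role of the mixed
  partial derivative of order i in t and j in x) with D 0 0 = f, such that
  D (i+1) j is the partial t-derivative of D i j and D i (j+1) is the partial
  x-derivative of D i j, everywhere.\<close>
definition smooth2 :: "(real \<Rightarrow> real \<Rightarrow> real) \<Rightarrow> bool" where
  "smooth2 f \<longleftrightarrow> (\<exists>D :: nat \<Rightarrow> nat \<Rightarrow> real \<Rightarrow> real \<Rightarrow> real.
     D 0 0 = f \<and>
     (\<forall>i j. continuous_on UNIV (\<lambda>p. D i j (fst p) (snd p))) \<and>
     (\<forall>i j t x. ((\<lambda>s. D i j s x) has_real_derivative D (Suc i) j t x) (at t)) \<and>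
     (\<forall>i j t x. ((\<lambda>y. D i j t y) has_real_derivative D i (Suc j) t x) (at x)))"

fun scheme :: "(real \<Rightarrow> real \<Rightarrow> real) \<Rightarrow> (real \<Rightarrow> real \<Rightarrow> real) \<Rightarrow> real \<Rightarrow> nat \<Rightarrow>
    real \<times> real \<Rightarrow> (nat \<Rightarrow> real) \<Rightarrow> (nat \<Rightarrow> real) \<Rightarrow> nat \<Rightarrow> real \<times> real" where
  "scheme v1 v2 \<sigma> N X0 \<xi>1 \<xi>2 0 = X0"
| "scheme v1 v2 \<sigma> N X0 \<xi>1 \<xi>2 (Suc n) =
    (let (a, b) = scheme v1 v2 \<sigma> N X0 \<xi>1 \<xi>2 n;
         dt = 1 / real N;
         t = (real n + 1/2) * dt;
         y = a + v1 t b * dt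
     in (y + \<sigma> * sqrt dt * \<xi>1 n,
         b + v2 t y * dt + \<sigma> * sqrt dt * \<xi>2 n))"

end

theory Submission
  imports Defs
begin


lemma per_nat_shift:
  fixes q :: "real \<Rightarrow> real"
  assumes per: "\<And>x. q (x+1) = q x"
  shows "q (y + real n) = q y"
proof (induction n)
  case (Suc n)
  have "q (y + real (Suc n)) = q ((y + real n) + 1)" by (simp add: ac_simps)
  then show ?case using per Suc by simp
qed simp

lemma per_int_shift:
  fixes q :: "real \<Rightarrow> real"
  assumes per: "\<And>x. q (x+1) = q x"
  shows "q (x + real_of_int k) = q x"
proof (cases "k \<ge> 0")
  case True
  then obtain n where "k = int n" by (metis nonneg_eq_int)
  then show ?thesis using per_nat_shift[of q, OF per] by simp
next
  case False
  then obtain n where "k = - int n" by (metis minus_minus nonneg_eq_int neg_0_le_iff_le le_cases)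
  then show ?thesis using per_nat_shift[of q, OF per, of "x - real n" n] by simp
qed

lemma lborel_shift:
  fixes f :: "real \<Rightarrow> real"
  shows "(\<integral>x. f (x + c) \<partial>lborel) = (\<integral>x. f x \<partial>lborel)"
  using lborel_integral_real_affine[of 1 f c] by (simp add: add.commute)


lemma integrable_ind_bounded:
  fixes q :: "real \<Rightarrow> real"
  assumes meas: "q \<in> borel_measurable borel" and bound: "\<And>x. \<bar>q x\<bar> \<le> C"
  shows "integrable lborel (\<lambda>x. indicator {a..<b} x * q x)"
proof (rule Bochner_Integration.integrable_bound[where f="\<lambda>x. C * indicator {a..<b} x :: real"])
  have "emeasure lborel {a..<b} < \<infinity>"
    by (cases "a \<le> b") auto
  then show "integrable lborel (\<lambda>x. C * indicator {a..<b} x :: real)" by simp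
  show "(\<lambda>x. indicator {a..<b} x * q x) \<in> borel_measurable lborel" using meas by simp
  have "C \<ge> 0" using bound[of 0] by simp
  then show "AE x in lborel. norm (indicator {a..<b} x * q x) \<le> norm (C * indicator {a..<b} x :: real)"
    using bound by (auto simp: indicator_def abs_mult)
qed

lemma ind_split:
  fixes a b c :: real assumes "a \<le> b" "b \<le> c"
  shows "indicator {a..<c} x = (indicator {a..<b} x + indicator {b..<c} x :: real)"
  using assms by (auto simp: indicator_def)


lemma per_interval:
  fixes q :: "real \<Rightarrow> real"
  assumes meas: "q \<in> borel_measurable borel" and bound: "\<And>x. \<bar>q x\<bar> \<le> C"
    and per: "\<And>x. q (x+1) = q x"
  shows "(\<integral>x. indicator {c..<c+1} x * q x \<partial>lborel) = (\<integral>x. indicator {0..<1} x * q x \<partial>lborel)"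
proof -
  define k where "k = \<lfloor>c\<rfloor>"
  define r where "r = c - real_of_int k"
  have r: "0 \<le> r" "r < 1" unfolding r_def k_def by linarith+
  have ii: "\<And>a b. integrable lborel (\<lambda>x. indicator {a..<b} x * q x)"
    by (rule integrable_ind_bounded[OF meas bound])
  have "(\<integral>x. indicator {c..<c+1} x * q x \<partial>lborel)
      = (\<integral>x. indicator {c..<c+1} (x + real_of_int k) * q (x + real_of_int k) \<partial>lborel)"
    using lborel_shift[of "\<lambda>x. indicator {c..<c+1} x * q x" "real_of_int k"] by simp
  also have "\<dots> = (\<integral>x. indicator {r..<r+1} x * q x \<partial>lborel)"
  proof (rule Bochner_Integration.integral_cong[OF refl])
    fix x
    have "indicator {c..<c+1} (x + real_of_int k) = (indicator {r..<r+1} x :: real)"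
      unfolding r_def indicator_def by auto
    then show "indicator {c..<c+1} (x + real_of_int k) * q (x + real_of_int k) = indicator {r..<r+1} x * q x"
      using per_int_shift[of q, OF per] by simp
  qed
  also have "\<dots> = (\<integral>x. indicator {r..<1} x * q x + indicator {1..<r+1} x * q x \<partial>lborel)"
    using ind_split[of r 1 "r+1"] r by (intro Bochner_Integration.integral_cong) (auto simp: distrib_right)
  also have "\<dots> = (\<integral>x. indicator {r..<1} x * q x \<partial>lborel) + (\<integral>x. indicator {1..<r+1} x * q x \<partial>lborel)"
    by (rule Bochner_Integration.integral_add[OF ii ii])
  also have "(\<integral>x. indicator {1..<r+1} x * q x \<partial>lborel) = (\<integral>x. indicator {0..<r} x * q x \<partial>lborel)"
  proof -
    have "(\<integral>x. indicator {1..<r+1} x * q x \<partial>lborel) = (\<integral>x. indicator {1..<r+1} (x+1) * q (x+1) \<partial>lborel)"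
      using lborel_shift[of "\<lambda>x. indicator {1..<r+1} x * q x" 1] by simp
    also have "\<dots> = (\<integral>x. indicator {0..<r} x * q x \<partial>lborel)"
    proof (rule Bochner_Integration.integral_cong[OF refl])
      fix x
      have "indicator {1..<r+1} (x+1) = (indicator {0..<r} x :: real)"
        unfolding indicator_def by auto
      then show "indicator {1..<r+1} (x+1) * q (x+1) = indicator {0..<r} x * q x"
        using per by simp
    qed
    finally show ?thesis .
  qed
  also have "(\<integral>x. indicator {r..<1} x * q x \<partial>lborel) + (\<integral>x. indicator {0..<r} x * q x \<partial>lborel)
      = (\<integral>x. indicator {0..<r} x * q x + indicator {r..<1} x * q x \<partial>lborel)"
    using Bochner_Integration.integral_add[OF ii ii] by simp
  also have "\<dots> = (\<integral>x. indicator {0..<1} x * q x \<partial>lborel)"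
    using ind_split[of 0 r 1] r by (intro Bochner_Integration.integral_cong) (auto simp: distrib_right)
  finally show ?thesis .
qed


definition unif :: "real measure" where
  "unif = density lborel (\<lambda>x. ennreal (indicator {0..<1::real} x))"

definition gauss :: "real measure" where
  "gauss = density lborel (\<lambda>x. ennreal (std_normal_density x))"

lemma sets_unif[simp, measurable_cong]: "sets unif = sets borel"
  by (simp add: unif_def)
lemma space_unif[simp]: "space unif = UNIV"
  by (simp add: unif_def)
lemma sets_gauss[simp, measurable_cong]: "sets gauss = sets borel"
  by (simp add: gauss_def)
lemma space_gauss[simp]: "space gauss = UNIV"
  by (simp add: gauss_def)

lemma prob_space_gauss: "prob_space gauss"
  unfolding gauss_def by (rule prob_space_normal_density) simp

lemma prob_space_unif: "prob_space unif"
proof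
  have "emeasure unif (space unif) = (\<integral>\<^sup>+x. indicator {0..<1::real} x \<partial>lborel)"
    unfolding unif_def by (subst emeasure_density) (auto simp: ennreal_indicator)
  also have "\<dots> = emeasure lborel {0..<1::real}"
    by (rule nn_integral_indicator) simp
  also have "\<dots> = 1" by simp
  finally show "emeasure unif (space unif) = 1" .
qed

lemma integral_unif:
  fixes f :: "real \<Rightarrow> real"
  assumes "f \<in> borel_measurable borel"
  shows "(\<integral>x. f x \<partial>unif) = (\<integral>x. indicator {0..<1} x * f x \<partial>lborel)"
  unfolding unif_def using assms by (subst integral_density) auto

lemma integral_gauss:
  fixes f :: "real \<Rightarrow> real"
  assumes "f \<in> borel_measurable borel"
  shows "(\<integral>x. f x \<partial>gauss) = (\<integral>x. std_normal_density x * f x \<partial>lborel)"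
  unfolding gauss_def using assms by (subst integral_density) auto

lemma unif_shift:
  fixes q :: "real \<Rightarrow> real"
  assumes meas: "q \<in> borel_measurable borel" and bound: "\<And>x. \<bar>q x\<bar> \<le> C"
    and per: "\<And>x. q (x+1) = q x"
  shows "(\<integral>x. q (x + c) \<partial>unif) = (\<integral>x. q x \<partial>unif)"
proof -
  have "(\<integral>x. q (x + c) \<partial>unif) = (\<integral>x. indicator {0..<1} x * q (x + c) \<partial>lborel)"
    using meas by (subst integral_unif) auto
  also have "\<dots> = (\<integral>x. indicator {c..<c+1} (x + c) * q (x + c) \<partial>lborel)"
  proof (rule Bochner_Integration.integral_cong[OF refl])
    fix x
    have "indicator {c..<c+1} (x + c) = (indicator {0..<1} x :: real)"
      unfolding indicator_def by auto
    then show "indicator {0..<1} x * q (x + c) = indicator {c..<c+1} (x + c) * q (x + c)" by simp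
  qed
  also have "\<dots> = (\<integral>x. indicator {c..<c+1} x * q x \<partial>lborel)"
    by (rule lborel_shift[of "\<lambda>x. indicator {c..<c+1} x * q x"])
  also have "\<dots> = (\<integral>x. indicator {0..<1} x * q x \<partial>lborel)"
    by (rule per_interval[OF meas bound per])
  also have "\<dots> = (\<integral>x. q x \<partial>unif)"
    using meas by (subst integral_unif) auto
  finally show ?thesis .
qed


definition dlt :: "real \<Rightarrow> real" where
  "dlt s = normal_density 0 1 (1 / (2 * s)) / s"

lemma dlt_pos: "s > 0 \<Longrightarrow> 0 < dlt s"
  unfolding dlt_def by (simp add: normal_density_pos)

lemma phi_ge:
  assumes "\<bar>z\<bar> \<le> l"
  shows "std_normal_density l \<le> std_normal_density z"
proof -
  have "z\<^sup>2 \<le> l\<^sup>2" using assms by (metis abs_ge_self abs_le_square_iff abs_of_nonneg dual_order.trans)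
  then have "exp (- l\<^sup>2 / 2) \<le> exp (- z\<^sup>2 / 2)" by simp
  then show ?thesis unfolding std_normal_density_def by (simp add: divide_right_mono)
qed

lemma doeblin1:
  fixes q :: "real \<Rightarrow> real"
  assumes s: "s > 0" and meas: "q \<in> borel_measurable borel" and bound: "\<And>x. \<bar>q x\<bar> \<le> C"
    and per: "\<And>x. q (x+1) = q x"
  shows "\<bar>(\<integral>z. q (u0 + s*z) \<partial>gauss) - dlt s * (\<integral>x. q x \<partial>unif)\<bar> \<le> (1 - dlt s) * C"
    and "dlt s \<le> 1"
proof -
  define l where "l = 1 / (2 * s)"
  define m where "m = std_normal_density l"
  define q' where "q' = (\<lambda>z. q (u0 + s*z))"
  define \<psi> where "\<psi> = (\<lambda>z. std_normal_density z - m * indicator {-l..<l} z)"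
  have C0: "C \<ge> 0" using bound[of 0] by simp
  have l0: "l > 0" using s by (simp add: l_def)
  have dl: "dlt s = 2 * l * m" using s by (simp add: dlt_def l_def m_def)
  have q'm[measurable]: "q' \<in> borel_measurable borel" unfolding q'_def using meas by measurable
  have q'b: "\<And>z. \<bar>q' z\<bar> \<le> C" unfolding q'_def using bound by simp
  have psi0: "\<psi> z \<ge> 0" for z
  proof (cases "z \<in> {-l..<l}")
    case True
    then have "\<bar>z\<bar> \<le> l" by auto
    then show ?thesis using phi_ge[of z l] True by (simp add: \<psi>_def m_def)
  qed (simp add: \<psi>_def)
  have meas_l: "emeasure lborel {-l..<l} < \<infinity>" using l0 by simp
  have int_ind: "integrable lborel (\<lambda>z. indicator {-l..<l} z :: real)"
    using meas_l by simp
  have int_phi: "integrable lborel std_normal_density" by simp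
  have int_psi: "integrable lborel \<psi>" unfolding \<psi>_def using int_ind int_phi by simp
  have int_psi_val: "(\<integral>z. \<psi> z \<partial>lborel) = 1 - 2 * l * m"
  proof -
    have "(\<integral>z. \<psi> z \<partial>lborel) = (\<integral>z. std_normal_density z \<partial>lborel) - m * (\<integral>z. indicator {-l..<l} z \<partial>lborel)"
      unfolding \<psi>_def using int_ind int_phi by simp
    also have "(\<integral>z. indicator {-l..<l} z \<partial>lborel) = measure lborel {-l..<l}" by simp
    also have "\<dots> = 2 * l" using l0 by (simp add: measure_def)
    finally show ?thesis by simp
  qed
  have "0 \<le> (\<integral>z. \<psi> z \<partial>lborel)" by (rule integral_nonneg_AE) (simp add: psi0)
  then show "dlt s \<le> 1" using int_psi_val dl by auto
  have int_ind_q: "integrable lborel (\<lambda>z. indicator {-l..<l} z * q' z)"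
    by (rule integrable_ind_bounded[OF q'm q'b])
  have int_psi_q: "integrable lborel (\<lambda>z. \<psi> z * q' z)"
  proof (rule Bochner_Integration.integrable_bound[where f="\<lambda>z. C * \<psi> z"])
    show "integrable lborel (\<lambda>z. C * \<psi> z)" using int_psi by simp
    show "(\<lambda>z. \<psi> z * q' z) \<in> borel_measurable lborel" unfolding \<psi>_def by measurable
    show "AE x in lborel. norm (\<psi> x * q' x) \<le> norm (C * \<psi> x)"
      using psi0 q'b C0 by (auto simp: abs_mult mult.commute[of "\<psi> _"] intro!: mult_right_mono)
  qed
  have I1: "(\<integral>z. indicator {-l..<l} z * q' z \<partial>lborel) = (\<integral>x. q x \<partial>unif) / s"
  proof -
    define f where "f = (\<lambda>x. indicator {u0 - 1/2..<(u0 - 1/2) + 1} x * q x)"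
    have "(\<integral>x. f x \<partial>lborel) = \<bar>s\<bar> *\<^sub>R (\<integral>x. f (u0 + s * x) \<partial>lborel)"
      using s by (intro lborel_integral_real_affine) simp
    also have "(\<lambda>x. f (u0 + s * x)) = (\<lambda>x. indicator {-l..<l} x * q' x)"
    proof
      fix x
      have "(u0 - 1/2 \<le> u0 + s*x) \<longleftrightarrow> (-l \<le> x)" using s by (simp add: l_def field_simps, linarith)
      moreover have "(u0 + s*x < u0 - 1/2 + 1) \<longleftrightarrow> (x < l)" using s by (simp add: l_def field_simps, linarith?)
      ultimately show "f (u0 + s * x) = indicator {-l..<l} x * q' x"
        unfolding f_def q'_def indicator_def by auto
    qed
    finally have "(\<integral>x. f x \<partial>lborel) = s * (\<integral>x. indicator {-l..<l} x * q' x \<partial>lborel)"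
      using s by simp
    moreover have "(\<integral>x. f x \<partial>lborel) = (\<integral>x. q x \<partial>unif)"
      unfolding f_def using per_interval[OF meas bound per, of "u0 - 1/2"] integral_unif[OF meas] by simp
    ultimately show ?thesis using s by (simp add: field_simps)
  qed
  have "(\<integral>z. q (u0 + s*z) \<partial>gauss) = (\<integral>z. std_normal_density z * q' z \<partial>lborel)"
    unfolding q'_def using meas by (subst integral_gauss) auto
  also have "\<dots> = (\<integral>z. m * (indicator {-l..<l} z * q' z) + \<psi> z * q' z \<partial>lborel)"
    by (rule Bochner_Integration.integral_cong) (auto simp: \<psi>_def algebra_simps)
  also have "\<dots> = m * (\<integral>z. indicator {-l..<l} z * q' z \<partial>lborel) + (\<integral>z. \<psi> z * q' z \<partial>lborel)"
    using int_ind_q int_psi_q by simp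
  finally have eq0: "(\<integral>z. q (u0 + s*z) \<partial>gauss) = m * (\<integral>z. indicator {-l..<l} z * q' z \<partial>lborel) + (\<integral>z. \<psi> z * q' z \<partial>lborel)" .
  have eq: "(\<integral>z. q (u0 + s*z) \<partial>gauss) - dlt s * (\<integral>x. q x \<partial>unif) = (\<integral>z. \<psi> z * q' z \<partial>lborel)"
  proof -
    have "m * ((\<integral>x. q x \<partial>unif) / s) = dlt s * (\<integral>x. q x \<partial>unif)"
      using dl s by (simp add: l_def field_simps)
    then show ?thesis using I1 eq0 by simp
  qed
  have "\<bar>\<integral>z. \<psi> z * q' z \<partial>lborel\<bar> \<le> (\<integral>z. \<bar>\<psi> z * q' z\<bar> \<partial>lborel)"
    by (rule integral_abs_bound)
  also have "\<dots> \<le> (\<integral>z. C * \<psi> z \<partial>lborel)"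
    using integrable_abs[OF int_psi_q] int_psi psi0 q'b C0
    by (intro integral_mono) (auto simp: abs_mult mult.commute[of "\<psi> _"] intro!: mult_right_mono)
  also have "\<dots> = (1 - dlt s) * C" using int_psi_val dl by simp
  finally show "\<bar>(\<integral>z. q (u0 + s*z) \<partial>gauss) - dlt s * (\<integral>x. q x \<partial>unif)\<bar> \<le> (1 - dlt s) * C"
    using eq by simp
qed


interpretation G: prob_space gauss by (rule prob_space_gauss)
interpretation Un: prob_space unif by (rule prob_space_unif)

lemma prob_abs_bound:
  fixes f :: "'a \<Rightarrow> real"
  assumes "prob_space M" "f \<in> borel_measurable M" "\<And>x. x \<in> space M \<Longrightarrow> \<bar>f x\<bar> \<le> C"
  shows "\<bar>\<integral>x. f x \<partial>M\<bar> \<le> C"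
proof -
  interpret prob_space M by fact
  have int: "integrable M f"
    using assms by (intro integrable_const_bound[where B=C]) auto
  have "\<bar>\<integral>x. f x \<partial>M\<bar> \<le> (\<integral>x. \<bar>f x\<bar> \<partial>M)" by (rule integral_abs_bound)
  also have "\<dots> \<le> (\<integral>x. C \<partial>M)"
    using assms int by (intro integral_mono) auto
  also have "\<dots> = C" by (simp add: prob_space)
  finally show ?thesis .
qed

definition per2 :: "(real \<times> real \<Rightarrow> real) \<Rightarrow> bool" where
  "per2 g \<longleftrightarrow> (\<forall>a b. g (a+1, b) = g (a, b) \<and> g (a, b+1) = g (a, b))"

definition tmean :: "(real \<times> real \<Rightarrow> real) \<Rightarrow> real" where
  "tmean g = (\<integral>a. (\<integral>b. g (a, b) \<partial>unif) \<partial>unif)"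

definition Kop :: "real \<Rightarrow> (real \<times> real \<Rightarrow> real) \<Rightarrow> real \<Rightarrow> real \<Rightarrow> real" where
  "Kop s g y e = (\<integral>z1. (\<integral>z2. g (y + s*z1, e + s*z2) \<partial>gauss) \<partial>gauss)"

lemma Kop_contract:
  fixes g :: "real \<times> real \<Rightarrow> real"
  assumes s: "s > 0" and meas[measurable]: "g \<in> borel_measurable (borel \<Otimes>\<^sub>M borel)"
    and bound: "\<And>x. \<bar>g x\<bar> \<le> C" and per: "per2 g" and tm: "tmean g = 0"
  shows "\<bar>Kop s g y e\<bar> \<le> (1 - (dlt s)\<^sup>2) * C"
proof -
  define \<delta> where "\<delta> = dlt s"
  have d0: "0 < \<delta>" and d1: "\<delta> \<le> 1" unfolding \<delta>_def using dlt_pos[OF s] doeblin1(2)[OF s, of "\<lambda>_. 0" 0] by auto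
  have C0: "C \<ge> 0" using bound[of 0] by simp
  define r where "r = (\<lambda>u. \<integral>z2. g (u, e + s*z2) \<partial>gauss)"
  define gb where "gb = (\<lambda>u. \<integral>w. g (u, w) \<partial>unif)"
  have r_m[measurable]: "r \<in> borel_measurable borel" unfolding r_def by measurable
  have gb_m[measurable]: "gb \<in> borel_measurable borel" unfolding gb_def by measurable
  have gb_b: "\<bar>gb u\<bar> \<le> C" for u
    unfolding gb_def by (rule prob_abs_bound[OF prob_space_unif]) (auto simp: bound)
  have gb_per: "gb (u + 1) = gb u" for u
    using per unfolding gb_def per2_def by simp
  have gb_mean: "(\<integral>u. gb u \<partial>unif) = 0" using tm unfolding gb_def tmean_def .
  have rg: "\<bar>r u - \<delta> * gb u\<bar> \<le> (1 - \<delta>) * C" for u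
  proof -
    have "\<bar>(\<integral>z. g (u, e + s*z) \<partial>gauss) - dlt s * (\<integral>x. g (u, x) \<partial>unif)\<bar> \<le> (1 - dlt s) * C"
      by (rule doeblin1(1)[OF s]) (use bound per in \<open>auto simp: per2_def\<close>)
    then show ?thesis unfolding r_def gb_def \<delta>_def .
  qed
  have A: "\<bar>(\<integral>z. gb (y + s*z) \<partial>gauss)\<bar> \<le> (1 - \<delta>) * C"
    using doeblin1(1)[OF s gb_m gb_b gb_per, of y] gb_mean unfolding \<delta>_def by simp
  have B: "\<bar>(\<integral>z. r (y + s*z) - \<delta> * gb (y + s*z) \<partial>gauss)\<bar> \<le> (1 - \<delta>) * C"
    by (rule prob_abs_bound[OF prob_space_gauss]) (auto simp: rg)
  have rb: "\<bar>r u\<bar> \<le> C" for u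
    unfolding r_def by (rule prob_abs_bound[OF prob_space_gauss]) (auto simp: bound)
  have int_r: "integrable gauss (\<lambda>z. r (y + s*z))"
    using rb by (intro G.integrable_const_bound[where B=C]) auto
  have int_gb: "integrable gauss (\<lambda>z. gb (y + s*z))"
    using gb_b by (intro G.integrable_const_bound[where B=C]) auto
  have "Kop s g y e = (\<integral>z. r (y + s*z) \<partial>gauss)" unfolding Kop_def r_def ..
  also have "\<dots> = \<delta> * (\<integral>z. gb (y + s*z) \<partial>gauss) + (\<integral>z. r (y + s*z) - \<delta> * gb (y + s*z) \<partial>gauss)"
    using int_r int_gb by simp
  finally have "\<bar>Kop s g y e\<bar> \<le> \<delta> * ((1 - \<delta>) * C) + (1 - \<delta>) * C"
  proof -
    assume eq: "Kop s g y e = \<delta> * (\<integral>z. gb (y + s*z) \<partial>gauss) + (\<integral>z. r (y + s*z) - \<delta> * gb (y + s*z) \<partial>gauss)"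
    have "\<bar>\<delta> * (\<integral>z. gb (y + s*z) \<partial>gauss)\<bar> \<le> \<delta> * ((1 - \<delta>) * C)"
      using A d0 by (simp add: abs_mult)
    then show ?thesis unfolding eq using B abs_triangle_ineq by (smt (verit))
  qed
  also have "\<dots> = (1 - \<delta>\<^sup>2) * C" by (simp add: power2_eq_square algebra_simps)
  finally show ?thesis unfolding \<delta>_def .
qed


lemma swap_int:
  fixes F :: "'a \<Rightarrow> 'b \<Rightarrow> real"
  assumes P1: "prob_space M1" and P2: "prob_space M2"
    and m: "(\<lambda>(x,y). F x y) \<in> borel_measurable (M1 \<Otimes>\<^sub>M M2)" and b: "\<And>x y. \<bar>F x y\<bar> \<le> C"
  shows "(\<integral>x. (\<integral>y. F x y \<partial>M2) \<partial>M1) = (\<integral>y. (\<integral>x. F x y \<partial>M1) \<partial>M2)"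
proof -
  interpret p: pair_prob_space M1 M2 using P1 P2 by (simp add: pair_prob_space_def pair_sigma_finite_def prob_space_imp_sigma_finite)
  have "integrable (M1 \<Otimes>\<^sub>M M2) (\<lambda>(x,y). F x y)"
    using m b by (intro p.P.integrable_const_bound[where B=C]) auto
  then show ?thesis by (rule p.Fubini_integral[symmetric])
qed

lemma Kop_meas[measurable]:
  fixes g :: "real \<times> real \<Rightarrow> real"
  assumes [measurable]: "g \<in> borel_measurable (borel \<Otimes>\<^sub>M borel)"
  shows "(\<lambda>x. Kop s g (fst x) (snd x)) \<in> borel_measurable (borel \<Otimes>\<^sub>M borel)"
  unfolding Kop_def by measurable

lemma Kop_bound:
  assumes [measurable]: "g \<in> borel_measurable (borel \<Otimes>\<^sub>M borel)" and b: "\<And>x. \<bar>g x\<bar> \<le> C"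
  shows "\<bar>Kop s g y e\<bar> \<le> C"
  unfolding Kop_def
  by (rule prob_abs_bound[OF prob_space_gauss], measurable,
      rule prob_abs_bound[OF prob_space_gauss]) (auto simp: b)


lemma int_cong: "(\<And>x. f x = g x) \<Longrightarrow> integral\<^sup>L M f = integral\<^sup>L M g"
  by (rule Bochner_Integration.integral_cong) auto

lemma Kop_invariant:
  fixes g :: "real \<times> real \<Rightarrow> real" and c d :: "real \<Rightarrow> real"
  assumes s: "s > 0" and gm[measurable]: "g \<in> borel_measurable (borel \<Otimes>\<^sub>M borel)"
    and b: "\<And>x. \<bar>g x\<bar> \<le> C" and per: "per2 g"
    and cm[measurable]: "c \<in> borel_measurable borel" and dm[measurable]: "d \<in> borel_measurable borel"
    and cp: "\<And>x. c (x+1) = c x" and dp: "\<And>x. d (x+1) = d x"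
  shows "tmean (\<lambda>(a,b). Kop s g (a + c b) (b + d (a + c b))) = tmean g"
proof -
  have g1: "g (x + 1, y) = g (x, y)" "g (x, y + 1) = g (x, y)" for x y using per by (auto simp: per2_def)
  have PU: "prob_space unif" and PG: "prob_space gauss" by (rule prob_space_unif, rule prob_space_gauss)
  have bnd: "\<bar>\<integral>x. f x \<partial>M\<bar> \<le> C" if "prob_space M" "f \<in> borel_measurable M" "\<And>x. \<bar>f x\<bar> \<le> C" for M and f :: "'z \<Rightarrow> real"
    using prob_abs_bound[OF that(1,2)] that(3) by blast
  define gb where "gb = (\<lambda>u. \<integral>w. g (u, w) \<partial>unif)"
  have gb_m[measurable]: "gb \<in> borel_measurable borel" unfolding gb_def by measurable
  have gb_b: "\<bar>gb u\<bar> \<le> C" for u unfolding gb_def by (rule bnd[OF PU]) (auto simp: b)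
  have gb_per: "gb (u + 1) = gb u" for u using g1 unfolding gb_def by simp
  have "tmean (\<lambda>(a,b). Kop s g (a + c b) (b + d (a + c b)))
      = (\<integral>a. (\<integral>b. Kop s g (a + c b) (b + d (a + c b)) \<partial>unif) \<partial>unif)"
    by (simp add: tmean_def)
  also have "\<dots> = (\<integral>b. (\<integral>a. Kop s g (a + c b) (b + d (a + c b)) \<partial>unif) \<partial>unif)"
    apply (rule swap_int[OF PU PU, where C=C])
    subgoal unfolding Kop_def by measurable
    subgoal by (rule Kop_bound[OF gm b])
    done
  also have "\<dots> = (\<integral>b. (\<integral>z1. (\<integral>z2. (\<integral>u. g (u + s*z1, b + d u + s*z2) \<partial>unif) \<partial>gauss) \<partial>gauss) \<partial>unif)"
  proof (rule int_cong)
    fix b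
    have "(\<integral>a. Kop s g (a + c b) (b + d (a + c b)) \<partial>unif)
       = (\<integral>a. (\<integral>z1. (\<integral>z2. g (a + c b + s*z1, b + d (a + c b) + s*z2) \<partial>gauss) \<partial>gauss) \<partial>unif)"
      by (simp add: Kop_def)
    also have "\<dots> = (\<integral>z1. (\<integral>a. (\<integral>z2. g (a + c b + s*z1, b + d (a + c b) + s*z2) \<partial>gauss) \<partial>unif) \<partial>gauss)"
      by (rule swap_int[OF PU PG, where C=C]) (measurable, rule bnd[OF PG], auto simp: b)
    also have "\<dots> = (\<integral>z1. (\<integral>z2. (\<integral>a. g (a + c b + s*z1, b + d (a + c b) + s*z2) \<partial>unif) \<partial>gauss) \<partial>gauss)"
      by (rule int_cong, rule swap_int[OF PU PG, where C=C]) (measurable, auto simp: b)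
    also have "\<dots> = (\<integral>z1. (\<integral>z2. (\<integral>u. g (u + s*z1, b + d u + s*z2) \<partial>unif) \<partial>gauss) \<partial>gauss)"
    proof (rule int_cong, rule int_cong)
      fix z1 z2
      define q where "q = (\<lambda>u. g (u + s*z1, b + d u + s*z2))"
      have qp: "q (x+1) = q x" for x
      proof -
        have "q (x+1) = g ((x + s*z1) + 1, b + d x + s*z2)" unfolding q_def by (subst dp) (simp add: ac_simps)
        then show ?thesis by (simp only: g1(1)) (simp add: q_def)
      qed
      have qm: "q \<in> borel_measurable borel" unfolding q_def by measurable
      have "(\<integral>a. q (a + c b) \<partial>unif) = (\<integral>u. q u \<partial>unif)"
        by (rule unif_shift[OF qm _ qp, where C=C]) (simp add: q_def b)
      then show "(\<integral>a. g (a + c b + s*z1, b + d (a + c b) + s*z2) \<partial>unif) = (\<integral>u. g (u + s*z1, b + d u + s*z2) \<partial>unif)"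
        by (simp add: q_def)
    qed
    finally show "(\<integral>a. Kop s g (a + c b) (b + d (a + c b)) \<partial>unif)
       = (\<integral>z1. (\<integral>z2. (\<integral>u. g (u + s*z1, b + d u + s*z2) \<partial>unif) \<partial>gauss) \<partial>gauss)" .
  qed
  also have "\<dots> = (\<integral>z1. (\<integral>b. (\<integral>z2. (\<integral>u. g (u + s*z1, b + d u + s*z2) \<partial>unif) \<partial>gauss) \<partial>unif) \<partial>gauss)"
    by (rule swap_int[OF PU PG, where C=C]) (measurable, (rule bnd, auto intro: PG PU simp: b)+)
  also have "\<dots> = (\<integral>z1. (\<integral>z2. (\<integral>b. (\<integral>u. g (u + s*z1, b + d u + s*z2) \<partial>unif) \<partial>unif) \<partial>gauss) \<partial>gauss)"
    by (rule int_cong, rule swap_int[OF PU PG, where C=C]) (measurable, rule bnd[OF PU], auto simp: b)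
  also have "\<dots> = (\<integral>z1. (\<integral>z2. (\<integral>u. (\<integral>b. g (u + s*z1, b + d u + s*z2) \<partial>unif) \<partial>unif) \<partial>gauss) \<partial>gauss)"
    by (rule int_cong, rule int_cong, rule swap_int[OF PU PU, where C=C]) (measurable, auto simp: b)
  also have "\<dots> = (\<integral>z1. (\<integral>z2. (\<integral>u. gb (u + s*z1) \<partial>unif) \<partial>gauss) \<partial>gauss)"
  proof (intro int_cong)
    fix z1 z2 u
    have "(\<integral>b. g (u + s*z1, b + (d u + s*z2)) \<partial>unif) = (\<integral>w. g (u + s*z1, w) \<partial>unif)"
      by (rule unif_shift[where q="\<lambda>w. g (u + s*z1, w)" and C=C]) (auto simp: b g1)
    then show "(\<integral>b. g (u + s*z1, b + d u + s*z2) \<partial>unif) = gb (u + s*z1)"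
      unfolding gb_def by (simp add: add.assoc)
  qed
  also have "\<dots> = (\<integral>z1. (\<integral>z2. tmean g \<partial>gauss) \<partial>gauss)"
  proof (intro int_cong)
    fix z1 z2
    show "(\<integral>u. gb (u + s*z1) \<partial>unif) = tmean g"
      unfolding tmean_def gb_def[symmetric] by (rule unif_shift[OF gb_m gb_b gb_per])
  qed
  also have "\<dots> = tmean g" using G.prob_space by simp
  finally show ?thesis .
qed


definition stepf :: "(real \<Rightarrow> real \<Rightarrow> real) \<Rightarrow> (real \<Rightarrow> real \<Rightarrow> real) \<Rightarrow> real \<Rightarrow> real \<Rightarrow> nat \<Rightarrow>
   real \<times> real \<Rightarrow> real \<times> real \<Rightarrow> real \<times> real" where
  "stepf v1 v2 s dt n x z =
    (fst x + v1 ((real n + 1/2) * dt) (snd x) * dt + s * fst z,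
     snd x + v2 ((real n + 1/2) * dt) (fst x + v1 ((real n + 1/2) * dt) (snd x) * dt) * dt + s * snd z)"

lemma scheme_Suc':
  "scheme v1 v2 \<sigma> N X0 x1 x2 (Suc n) =
     stepf v1 v2 (\<sigma> * sqrt (1 / real N)) (1 / real N) n (scheme v1 v2 \<sigma> N X0 x1 x2 n) (x1 n, x2 n)"
  by (simp add: Let_def stepf_def split: prod.split)

lemma scheme_cong:
  "(\<And>i. i < n \<Longrightarrow> x1 i = y1 i \<and> x2 i = y2 i) \<Longrightarrow>
    scheme v1 v2 \<sigma> N X0 x1 x2 n = scheme v1 v2 \<sigma> N X0 y1 y2 n"
  by (induction n) (auto simp: scheme_Suc')

lemma stepf_meas[measurable]:
  assumes [measurable]: "v1 ((real n + 1/2) * dt) \<in> borel_measurable borel"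
     "v2 ((real n + 1/2) * dt) \<in> borel_measurable borel"
  shows "(\<lambda>p. stepf v1 v2 s dt n (fst p) (snd p)) \<in> measurable ((borel \<Otimes>\<^sub>M borel) \<Otimes>\<^sub>M (borel \<Otimes>\<^sub>M borel)) (borel \<Otimes>\<^sub>M borel)"
  unfolding stepf_def by measurable


locale schm = prob_space M for M :: "'a measure" +
  fixes v1 v2 :: "real \<Rightarrow> real \<Rightarrow> real" and \<sigma> :: real and NN :: nat and X0 :: "real \<times> real"
    and \<xi>1 \<xi>2 :: "nat \<Rightarrow> 'a \<Rightarrow> real" and B :: real
  assumes sig: "\<sigma> > 0" and NN: "NN \<ge> 1"
    and v1m[measurable]: "\<And>t. v1 t \<in> borel_measurable borel"
    and v2m[measurable]: "\<And>t. v2 t \<in> borel_measurable borel"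
    and v1b: "\<And>t x. \<bar>v1 t x\<bar> \<le> B" and v2b: "\<And>t x. \<bar>v2 t x\<bar> \<le> B"
    and v1p: "\<And>t x. v1 t (x + 1) = v1 t x" and v2p: "\<And>t x. v2 t (x + 1) = v2 t x"
    and v1z: "\<And>t. (\<integral>x. v1 t x \<partial>unif) = 0" and v2z: "\<And>t. (\<integral>x. v2 t x \<partial>unif) = 0"
    and indep: "indep_vars (\<lambda>_. borel) (\<lambda>k. case k of Inl n \<Rightarrow> \<xi>1 n | Inr n \<Rightarrow> \<xi>2 n) UNIV"
    and d1: "\<And>n. distributed M lborel (\<xi>1 n) std_normal_density"
    and d2: "\<And>n. distributed M lborel (\<xi>2 n) std_normal_density"
begin

definition "xi = (\<lambda>k. case k of Inl n \<Rightarrow> \<xi>1 n | Inr n \<Rightarrow> \<xi>2 n)"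
definition "Km m = Inl ` {..<m} \<union> Inr ` {..<(m::nat)}"
definition "Am m \<omega> = restrict (\<lambda>i. xi i \<omega>) (Km m)"

lemma xi_simps[simp]: "xi (Inl n) = \<xi>1 n" "xi (Inr n) = \<xi>2 n" by (simp_all add: xi_def)

lemma indep': "indep_vars (\<lambda>_. borel) xi UNIV"
  using indep unfolding xi_def .

lemma xi1m[measurable]: "\<xi>1 n \<in> borel_measurable M"
  using d1[of n] by (auto simp: distributed_def)
lemma xi2m[measurable]: "\<xi>2 n \<in> borel_measurable M"
  using d2[of n] by (auto simp: distributed_def)

lemma distr_xi1: "distr M borel (\<xi>1 n) = gauss"
proof -
  have "distr M borel (\<xi>1 n) = distr M lborel (\<xi>1 n)" by (rule distr_cong) auto
  also have "\<dots> = gauss" using d1[of n] by (simp add: distributed_def gauss_def)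
  finally show ?thesis .
qed
lemma distr_xi2: "distr M borel (\<xi>2 n) = gauss"
proof -
  have "distr M borel (\<xi>2 n) = distr M lborel (\<xi>2 n)" by (rule distr_cong) auto
  also have "\<dots> = gauss" using d2[of n] by (simp add: distributed_def gauss_def)
  finally show ?thesis .
qed

lemma indep_pair: "indep_var borel (\<xi>1 m) borel (\<xi>2 m)"
proof -
  have "indep_var (PiM {Inl m} (\<lambda>_. borel)) (\<lambda>\<omega>. restrict (\<lambda>i. xi i \<omega>) {Inl m})
                  (PiM {Inr m} (\<lambda>_. borel)) (\<lambda>\<omega>. restrict (\<lambda>i. xi i \<omega>) {Inr m})"
    by (rule indep_var_restrict[OF indep']) auto
  then have "indep_var borel ((\<lambda>r. r (Inl m)) \<circ> (\<lambda>\<omega>. restrict (\<lambda>i. xi i \<omega>) {Inl m}))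
                  borel ((\<lambda>r. r (Inr m)) \<circ> (\<lambda>\<omega>. restrict (\<lambda>i. xi i \<omega>) {Inr m}))"
    by (rule indep_var_compose) measurable
  moreover have "(\<lambda>r. r (Inl m)) \<circ> (\<lambda>\<omega>. restrict (\<lambda>i. xi i \<omega>) {Inl m}) = \<xi>1 m" by (auto simp: fun_eq_iff)
  moreover have "(\<lambda>r. r (Inr m)) \<circ> (\<lambda>\<omega>. restrict (\<lambda>i. xi i \<omega>) {Inr m}) = \<xi>2 m" by (auto simp: fun_eq_iff)
  ultimately show ?thesis by simp
qed

lemma distr_Z: "distr M (borel \<Otimes>\<^sub>M borel) (\<lambda>\<omega>. (\<xi>1 m \<omega>, \<xi>2 m \<omega>)) = gauss \<Otimes>\<^sub>M gauss"
  using indep_pair[of m] unfolding indep_var_distribution_eq by (simp add: distr_xi1 distr_xi2)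

definition "Lm m = {Inl m, Inr (m::nat)}"
definition "Rm m \<omega> = restrict (\<lambda>i. xi i \<omega>) (Lm m)"

lemma indep_AR: "indep_var (PiM (Km m) (\<lambda>_. borel)) (Am m) (PiM (Lm m) (\<lambda>_. borel)) (Rm m)"
  unfolding Am_def[abs_def] Rm_def[abs_def]
  by (rule indep_var_restrict[OF indep']) (auto simp: Km_def Lm_def)

lemma Am_meas[measurable]: "Am m \<in> measurable M (PiM (Km m) (\<lambda>_. borel))"
  using indep_AR[of m] unfolding indep_var_distribution_eq by simp
lemma Rm_meas[measurable]: "Rm m \<in> measurable M (PiM (Lm m) (\<lambda>_. borel))"
  using indep_AR[of m] unfolding indep_var_distribution_eq by simp

lemma core:
  fixes F :: "((nat + nat) \<Rightarrow> real) \<Rightarrow> real \<times> real \<Rightarrow> real"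
  assumes Fm[measurable]: "(\<lambda>p. F (fst p) (snd p)) \<in> borel_measurable (PiM (Km m) (\<lambda>_. borel) \<Otimes>\<^sub>M (borel \<Otimes>\<^sub>M borel))"
    and Fb: "\<And>a z. \<bar>F a z\<bar> \<le> C"
  shows "(\<integral>\<omega>. F (Am m \<omega>) (\<xi>1 m \<omega>, \<xi>2 m \<omega>) \<partial>M)
       = (\<integral>\<omega>. (\<integral>z1. (\<integral>z2. F (Am m \<omega>) (z1, z2) \<partial>gauss) \<partial>gauss) \<partial>M)"
proof -
  define DA where "DA = distr M (PiM (Km m) (\<lambda>_. borel)) (Am m)"
  define DR where "DR = distr M (PiM (Lm m) (\<lambda>_. borel)) (Rm m)"
  define h where "h = (\<lambda>r::nat+nat\<Rightarrow>real. (r (Inl m), r (Inr m)))"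
  have hm[measurable]: "h \<in> measurable (PiM (Lm m) (\<lambda>_. borel)) (borel \<Otimes>\<^sub>M borel)"
    unfolding h_def by (intro measurable_Pair measurable_component_singleton) (auto simp: Lm_def)
  have hR: "h (Rm m \<omega>) = (\<xi>1 m \<omega>, \<xi>2 m \<omega>)" for \<omega> by (simp add: h_def Rm_def Lm_def)
  have PDA: "prob_space DA" unfolding DA_def by (rule prob_space_distr) measurable
  have PDR: "prob_space DR" unfolding DR_def by (rule prob_space_distr) measurable
  have joint: "distr M (PiM (Km m) (\<lambda>_. borel) \<Otimes>\<^sub>M PiM (Lm m) (\<lambda>_. borel)) (\<lambda>\<omega>. (Am m \<omega>, Rm m \<omega>))
      = DA \<Otimes>\<^sub>M DR"
    using indep_AR[of m] unfolding indep_var_distribution_eq DA_def DR_def by simp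
  interpret p: pair_prob_space DA DR using PDA PDR by (simp add: pair_prob_space_def pair_sigma_finite_def prob_space_imp_sigma_finite)
  interpret q: pair_prob_space gauss gauss using prob_space_gauss by (simp add: pair_prob_space_def pair_sigma_finite_def prob_space_imp_sigma_finite)
  have sDA: "sets DA = sets (PiM (Km m) (\<lambda>_. borel))" unfolding DA_def by simp
  have sDR: "sets DR = sets (PiM (Lm m) (\<lambda>_. borel))" unfolding DR_def by simp
  have Fm2: "(\<lambda>p. F (fst p) (h (snd p))) \<in> borel_measurable (PiM (Km m) (\<lambda>_. borel) \<Otimes>\<^sub>M PiM (Lm m) (\<lambda>_. borel))"
  proof -
    have "(\<lambda>p. (fst p, h (snd p))) \<in> measurable (PiM (Km m) (\<lambda>_. borel) \<Otimes>\<^sub>M PiM (Lm m) (\<lambda>_. borel)) (PiM (Km m) (\<lambda>_. borel) \<Otimes>\<^sub>M (borel \<Otimes>\<^sub>M borel))"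
      by measurable
    from measurable_compose[OF this Fm] show ?thesis by (simp add: comp_def)
  qed
  have Fm': "(\<lambda>p. F (fst p) (h (snd p))) \<in> borel_measurable (DA \<Otimes>\<^sub>M DR)"
    using Fm2 by (subst measurable_cong_sets[OF sets_pair_measure_cong[OF sDA sDR] refl])
  have "(\<integral>\<omega>. F (Am m \<omega>) (\<xi>1 m \<omega>, \<xi>2 m \<omega>) \<partial>M) = (\<integral>\<omega>. F (Am m \<omega>) (h (Rm m \<omega>)) \<partial>M)"
    by (simp add: hR)
  also have "\<dots> = (\<integral>p. F (fst p) (h (snd p)) \<partial>distr M (PiM (Km m) (\<lambda>_. borel) \<Otimes>\<^sub>M PiM (Lm m) (\<lambda>_. borel)) (\<lambda>\<omega>. (Am m \<omega>, Rm m \<omega>)))"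
    using Fm2 by (subst integral_distr) auto
  also have "\<dots> = (\<integral>p. F (fst p) (h (snd p)) \<partial>(DA \<Otimes>\<^sub>M DR))" unfolding joint ..
  also have "\<dots> = (\<integral>a. (\<integral>r. F a (h r) \<partial>DR) \<partial>DA)"
  proof -
    have "integrable (DA \<Otimes>\<^sub>M DR) (\<lambda>p. F (fst p) (h (snd p)))"
      using Fm' Fb by (intro p.P.integrable_const_bound[where B=C]) auto
    then show ?thesis using p.integral_fst'[of "\<lambda>p. F (fst p) (h (snd p))"] by (simp add: split_beta')
  qed
  also have "\<dots> = (\<integral>a. (\<integral>z1. (\<integral>z2. F a (z1, z2) \<partial>gauss) \<partial>gauss) \<partial>DA)"
  proof (rule Bochner_Integration.integral_cong[OF refl])
    fix a assume "a \<in> space DA"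
    then have a: "a \<in> space (PiM (Km m) (\<lambda>_. borel))" unfolding DA_def by simp
    have Fa[measurable]: "F a \<in> borel_measurable (borel \<Otimes>\<^sub>M borel)"
      using measurable_compose[OF measurable_Pair1'[OF a] Fm] by (simp add: comp_def)
    have "(\<integral>r. F a (h r) \<partial>DR) = (\<integral>\<omega>. F a (h (Rm m \<omega>)) \<partial>M)"
      unfolding DR_def by (subst integral_distr) auto
    also have "\<dots> = (\<integral>\<omega>. F a (\<xi>1 m \<omega>, \<xi>2 m \<omega>) \<partial>M)" by (simp add: hR)
    also have "\<dots> = (\<integral>z. F a z \<partial>distr M (borel \<Otimes>\<^sub>M borel) (\<lambda>\<omega>. (\<xi>1 m \<omega>, \<xi>2 m \<omega>)))"
      by (subst integral_distr) auto
    also have "\<dots> = (\<integral>z. F a z \<partial>(gauss \<Otimes>\<^sub>M gauss))" by (simp add: distr_Z)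
    also have "\<dots> = (\<integral>z1. (\<integral>z2. F a (z1, z2) \<partial>gauss) \<partial>gauss)"
    proof -
      have "integrable (gauss \<Otimes>\<^sub>M gauss) (F a)"
        using Fb by (intro q.P.integrable_const_bound[where B=C]) auto
      then show ?thesis using q.integral_fst'[of "F a"] by (simp add: split_beta')
    qed
    finally show "(\<integral>r. F a (h r) \<partial>DR) = (\<integral>z1. (\<integral>z2. F a (z1, z2) \<partial>gauss) \<partial>gauss)" .
  qed
  also have "\<dots> = (\<integral>\<omega>. (\<integral>z1. (\<integral>z2. F (Am m \<omega>) (z1, z2) \<partial>gauss) \<partial>gauss) \<partial>M)"
  proof -
    have m1: "(\<lambda>p. F (fst (fst p)) (snd (fst p), snd p)) \<in> borel_measurable ((PiM (Km m) (\<lambda>_. borel) \<Otimes>\<^sub>M gauss) \<Otimes>\<^sub>M gauss)"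
    proof -
      have "(\<lambda>p. (fst (fst p), (snd (fst p), snd p))) \<in> measurable ((PiM (Km m) (\<lambda>_. borel) \<Otimes>\<^sub>M gauss) \<Otimes>\<^sub>M gauss) (PiM (Km m) (\<lambda>_. borel) \<Otimes>\<^sub>M (borel \<Otimes>\<^sub>M borel))"
        by measurable
      from measurable_compose[OF this Fm] show ?thesis by (simp add: comp_def)
    qed
    have m2: "(\<lambda>x. \<integral>z2. F (fst x) (snd x, z2) \<partial>gauss) \<in> borel_measurable (PiM (Km m) (\<lambda>_. borel) \<Otimes>\<^sub>M gauss)"
      using G.borel_measurable_lebesgue_integral[of "\<lambda>x z2. F (fst x) (snd x, z2)"] m1 by (simp add: split_beta')
    have m3: "(\<lambda>a. \<integral>z1. (\<integral>z2. F a (z1, z2) \<partial>gauss) \<partial>gauss) \<in> borel_measurable (PiM (Km m) (\<lambda>_. borel))"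
      using G.borel_measurable_lebesgue_integral[of "\<lambda>a z1. \<integral>z2. F a (z1, z2) \<partial>gauss"] m2 by (simp add: split_beta')
    show ?thesis unfolding DA_def using m3 by (subst integral_distr) auto
  qed
  finally show ?thesis .
qed

end


context schm begin

definition "dt = 1 / real NN"
definition "s = \<sigma> * sqrt dt"
definition "tt n = (real n + 1/2) * dt"
definition "X n \<omega> = scheme v1 v2 \<sigma> NN X0 (\<lambda>k. \<xi>1 k \<omega>) (\<lambda>k. \<xi>2 k \<omega>) n"
definition "Sch n a = scheme v1 v2 \<sigma> NN X0 (\<lambda>k. a (Inl k)) (\<lambda>k. a (Inr k)) n"
definition "Yf m x = fst x + v1 (tt m) (snd x) * dt"
definition "Ef m x = snd x + v2 (tt m) (Yf m x) * dt"
definition "Pop m g x = Kop s g (Yf m x) (Ef m x)"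

lemma dt_pos: "dt > 0" using NN by (simp add: dt_def)
lemma s_pos: "s > 0" using sig dt_pos by (simp add: s_def)

lemma step_eq: "stepf v1 v2 s dt m x z = (Yf m x + s * fst z, Ef m x + s * snd z)"
  by (simp add: stepf_def Yf_def Ef_def tt_def)

lemma Sch_Suc: "Sch (Suc n) a = stepf v1 v2 s dt n (Sch n a) (a (Inl n), a (Inr n))"
  unfolding Sch_def s_def dt_def by (rule scheme_Suc')

lemma X_Suc: "X (Suc n) \<omega> = stepf v1 v2 s dt n (X n \<omega>) (\<xi>1 n \<omega>, \<xi>2 n \<omega>)"
  unfolding X_def s_def dt_def by (rule scheme_Suc')

lemma X_Am: "n \<le> m \<Longrightarrow> X n \<omega> = Sch n (Am m \<omega>)"
  unfolding X_def Sch_def Am_def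
  by (rule scheme_cong) (auto simp: Km_def)

lemma Sch_meas: "n \<le> m \<Longrightarrow> Sch n \<in> measurable (PiM (Km m) (\<lambda>_. borel)) (borel \<Otimes>\<^sub>M borel)"
proof (induction n)
  case 0
  then show ?case by (simp add: Sch_def) (rule measurable_const, simp add: space_pair_measure)
next
  case (Suc n)
  then have IH: "Sch n \<in> measurable (PiM (Km m) (\<lambda>_. borel)) (borel \<Otimes>\<^sub>M borel)" by simp
  have "(\<lambda>a. (Sch n a, (a (Inl n), a (Inr n)))) \<in> measurable (PiM (Km m) (\<lambda>_. borel)) ((borel \<Otimes>\<^sub>M borel) \<Otimes>\<^sub>M (borel \<Otimes>\<^sub>M borel))"
    using Suc.prems by (intro measurable_Pair IH measurable_component_singleton) (auto simp: Km_def)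
  from measurable_compose[OF this stepf_meas[of v1 n dt v2 s]] show ?case
    by (simp add: comp_def Sch_Suc)
qed

lemma X_meas[measurable]: "X n \<in> measurable M (borel \<Otimes>\<^sub>M borel)"
proof -
  have "X n = Sch n \<circ> Am n" by (auto simp: fun_eq_iff X_Am)
  then show ?thesis using Sch_meas[of n n] by simp
qed

lemma Yf_meas[measurable]: "Yf m \<in> borel_measurable (borel \<Otimes>\<^sub>M borel)"
  unfolding Yf_def by measurable
lemma Ef_meas[measurable]: "Ef m \<in> borel_measurable (borel \<Otimes>\<^sub>M borel)"
  unfolding Ef_def by measurable

lemma Pop_meas[measurable]:
  assumes [measurable]: "g \<in> borel_measurable (borel \<Otimes>\<^sub>M borel)"
  shows "Pop m g \<in> borel_measurable (borel \<Otimes>\<^sub>M borel)"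
proof -
  have "(\<lambda>x. (Yf m x, Ef m x)) \<in> measurable (borel \<Otimes>\<^sub>M borel) (borel \<Otimes>\<^sub>M borel)" by measurable
  from measurable_compose[OF this Kop_meas[of g s]] show ?thesis
    by (simp add: comp_def Pop_def[abs_def])
qed

lemma markov:
  assumes jm: "j \<le> m"
    and Phim[measurable]: "Phi \<in> borel_measurable (borel \<Otimes>\<^sub>M borel)" and Phib: "\<And>x. \<bar>Phi x\<bar> \<le> C1"
    and gm[measurable]: "g \<in> borel_measurable (borel \<Otimes>\<^sub>M borel)" and gb: "\<And>x. \<bar>g x\<bar> \<le> C2"
  shows "(\<integral>\<omega>. Phi (X j \<omega>) * g (X (Suc m) \<omega>) \<partial>M) = (\<integral>\<omega>. Phi (X j \<omega>) * Pop m g (X m \<omega>) \<partial>M)"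
proof -
  define F where "F = (\<lambda>a z. Phi (Sch j a) * g (stepf v1 v2 s dt m (Sch m a) z))"
  have Sj[measurable]: "Sch j \<in> measurable (PiM (Km m) (\<lambda>_. borel)) (borel \<Otimes>\<^sub>M borel)" using Sch_meas jm by simp
  have Sm[measurable]: "Sch m \<in> measurable (PiM (Km m) (\<lambda>_. borel)) (borel \<Otimes>\<^sub>M borel)" using Sch_meas by simp
  have Fm: "(\<lambda>p. F (fst p) (snd p)) \<in> borel_measurable (PiM (Km m) (\<lambda>_. borel) \<Otimes>\<^sub>M (borel \<Otimes>\<^sub>M borel))"
  proof -
    have "(\<lambda>p. (Sch m (fst p), snd p)) \<in> measurable (PiM (Km m) (\<lambda>_. borel) \<Otimes>\<^sub>M (borel \<Otimes>\<^sub>M borel)) ((borel \<Otimes>\<^sub>M borel) \<Otimes>\<^sub>M (borel \<Otimes>\<^sub>M borel))"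
      by measurable
    from measurable_compose[OF this stepf_meas[of v1 m dt v2 s]]
    have [measurable]: "(\<lambda>p. stepf v1 v2 s dt m (Sch m (fst p)) (snd p)) \<in> measurable (PiM (Km m) (\<lambda>_. borel) \<Otimes>\<^sub>M (borel \<Otimes>\<^sub>M borel)) (borel \<Otimes>\<^sub>M borel)"
      by (simp add: comp_def)
    show ?thesis unfolding F_def by measurable
  qed
  have C1: "C1 \<ge> 0" using Phib[of 0] by simp
  have Fb: "\<bar>F a z\<bar> \<le> C1 * C2" for a z
    unfolding F_def abs_mult by (intro mult_mono Phib gb) (auto simp: C1)
  have e1: "\<And>\<omega>. X j \<omega> = Sch j (Am m \<omega>)" using X_Am[OF jm] .
  have e2: "\<And>\<omega>. X m \<omega> = Sch m (Am m \<omega>)" using X_Am[of m m] by simp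
  have "(\<integral>\<omega>. Phi (X j \<omega>) * g (X (Suc m) \<omega>) \<partial>M) = (\<integral>\<omega>. F (Am m \<omega>) (\<xi>1 m \<omega>, \<xi>2 m \<omega>) \<partial>M)"
    by (simp only: F_def X_Suc e1 e2)
  also have "\<dots> = (\<integral>\<omega>. (\<integral>z1. (\<integral>z2. F (Am m \<omega>) (z1, z2) \<partial>gauss) \<partial>gauss) \<partial>M)"
    by (rule core[OF Fm Fb])
  also have "\<dots> = (\<integral>\<omega>. Phi (X j \<omega>) * Pop m g (X m \<omega>) \<partial>M)"
    by (simp add: F_def e1 e2 Pop_def Kop_def step_eq)
  finally show ?thesis .
qed

end


lemma Kop_per:
  assumes "per2 g"
  shows "Kop s g (y+1) e = Kop s g y e" "Kop s g y (e+1) = Kop s g y e"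
proof -
  have g1: "g (a + 1, b) = g (a, b)" "g (a, b + 1) = g (a, b)" for a b using assms by (auto simp: per2_def)
  have "g (y + 1 + s*z1, e + s*z2) = g (y + s*z1, e + s*z2)" for z1 z2
  proof -
    have "y + 1 + s*z1 = (y + s*z1) + 1" by simp
    then show ?thesis by (simp only: g1)
  qed
  then show "Kop s g (y+1) e = Kop s g y e" by (simp add: Kop_def)
  have "g (y + s*z1, e + 1 + s*z2) = g (y + s*z1, e + s*z2)" for z1 z2
  proof -
    have "e + 1 + s*z2 = (e + s*z2) + 1" by simp
    then show ?thesis by (simp only: g1)
  qed
  then show "Kop s g y (e+1) = Kop s g y e" by (simp add: Kop_def)
qed

context schm begin

definition "rho = 1 - (dlt s)\<^sup>2"

lemma rho_bounds: "0 \<le> rho" "rho < 1"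
proof -
  have "dlt s \<le> 1" using doeblin1(2)[OF s_pos, of "\<lambda>_. 0" 0] by simp
  moreover have "0 < dlt s" by (rule dlt_pos[OF s_pos])
  ultimately show "0 \<le> rho" "rho < 1" unfolding rho_def by (auto simp: power_le_one)
qed

lemma Pop_per2: "per2 g \<Longrightarrow> per2 (Pop m g)"
  unfolding per2_def[of "Pop m g"]
proof (intro allI conjI)
  fix a b assume g: "per2 g"
  have Y1: "Yf m (a+1, b) = Yf m (a, b) + 1" by (simp add: Yf_def)
  moreover have "Ef m (a+1, b) = Ef m (a, b)"
    unfolding Ef_def by (simp only: Y1 v2p) simp
  ultimately show "Pop m g (a + 1, b) = Pop m g (a, b)" by (simp add: Pop_def Kop_per[OF g])
  have "Yf m (a, b+1) = Yf m (a, b)" by (simp add: Yf_def v1p)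
  moreover have "Ef m (a, b+1) = Ef m (a, b) + 1"
    by (simp add: Ef_def Yf_def v1p)
  ultimately show "Pop m g (a, b + 1) = Pop m g (a, b)" by (simp add: Pop_def Kop_per[OF g])
qed

lemma Pop_tmean:
  assumes gm[measurable]: "g \<in> borel_measurable (borel \<Otimes>\<^sub>M borel)" and gb: "\<And>x. \<bar>g x\<bar> \<le> C" and gp: "per2 g"
  shows "tmean (Pop m g) = tmean g"
proof -
  define c where "c = (\<lambda>b. v1 (tt m) b * dt)"
  define d where "d = (\<lambda>u. v2 (tt m) u * dt)"
  have "Pop m g = (\<lambda>(a,b). Kop s g (a + c b) (b + d (a + c b)))"
    by (auto simp: fun_eq_iff Pop_def Yf_def Ef_def c_def d_def)
  moreover have "tmean (\<lambda>(a,b). Kop s g (a + c b) (b + d (a + c b))) = tmean g"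
    by (rule Kop_invariant[OF s_pos gm gb gp]) (auto simp: c_def d_def v1p v2p)
  ultimately show ?thesis by simp
qed

lemma Pop_bound:
  assumes gm[measurable]: "g \<in> borel_measurable (borel \<Otimes>\<^sub>M borel)" and gb: "\<And>x. \<bar>g x\<bar> \<le> C" and gp: "per2 g"
    and gt: "tmean g = 0"
  shows "\<bar>Pop m g x\<bar> \<le> rho * C"
  unfolding Pop_def rho_def by (rule Kop_contract[OF s_pos gm gb gp gt])

lemma decay:
  assumes Phim[measurable]: "Phi \<in> borel_measurable (borel \<Otimes>\<^sub>M borel)" and Phib: "\<And>x. \<bar>Phi x\<bar> \<le> C1"
  shows "g \<in> borel_measurable (borel \<Otimes>\<^sub>M borel) \<Longrightarrow> (\<And>x. \<bar>g x\<bar> \<le> C2) \<Longrightarrow> per2 g \<Longrightarrow> tmean g = 0 \<Longrightarrow>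
    \<bar>\<integral>\<omega>. Phi (X j \<omega>) * g (X (j + d) \<omega>) \<partial>M\<bar> \<le> C1 * C2 * rho ^ d"
proof (induction d arbitrary: g C2)
  have PM: "prob_space M" by intro_locales
  case 0
  have C1: "C1 \<ge> 0" using Phib[of 0] by simp
  have gm[measurable]: "g \<in> borel_measurable (borel \<Otimes>\<^sub>M borel)" by fact
  show ?case
    by simp (rule prob_abs_bound[OF PM], measurable,
        auto simp: abs_mult intro!: mult_mono Phib 0(2) C1)
next
  case (Suc d)
  have gm[measurable]: "g \<in> borel_measurable (borel \<Otimes>\<^sub>M borel)" by fact
  have "(\<integral>\<omega>. Phi (X j \<omega>) * g (X (j + Suc d) \<omega>) \<partial>M) = (\<integral>\<omega>. Phi (X j \<omega>) * Pop (j + d) g (X (j + d) \<omega>) \<partial>M)"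
    using markov[where j=j and m="j+d", OF _ Phim Phib gm Suc.prems(2)] by simp
  also have "\<bar>\<dots>\<bar> \<le> C1 * (rho * C2) * rho ^ d"
    by (rule Suc.IH) (auto intro: Pop_bound[OF gm Suc.prems(2-4)] Pop_per2[OF Suc.prems(3)]
         simp: Pop_tmean[OF gm Suc.prems(2-3)] Suc.prems(4))
  finally show ?case by (simp add: algebra_simps)
qed

end


context schm begin

definition "F1 k x = v1 (tt k) (snd x)"
definition "F2 k x = v2 (tt k) (Yf k x)"

lemma F1_meas[measurable]: "F1 k \<in> borel_measurable (borel \<Otimes>\<^sub>M borel)"
  unfolding F1_def by measurable
lemma F2_meas[measurable]: "F2 k \<in> borel_measurable (borel \<Otimes>\<^sub>M borel)"
  unfolding F2_def by measurable
lemma F1_b: "\<bar>F1 k x\<bar> \<le> B" unfolding F1_def by (rule v1b)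
lemma F2_b: "\<bar>F2 k x\<bar> \<le> B" unfolding F2_def by (rule v2b)

lemma F1_per: "per2 (F1 k)" unfolding per2_def F1_def by (simp add: v1p)
lemma F2_per: "per2 (F2 k)"
  unfolding per2_def
proof (intro allI conjI)
  fix a b
  have Y1: "Yf k (a+1, b) = Yf k (a, b) + 1" by (simp add: Yf_def)
  show "F2 k (a + 1, b) = F2 k (a, b)" unfolding F2_def by (simp only: Y1 v2p)
  have "Yf k (a, b+1) = Yf k (a, b)" by (simp add: Yf_def v1p)
  then show "F2 k (a, b + 1) = F2 k (a, b)" unfolding F2_def by simp
qed

lemma F1_tmean: "tmean (F1 k) = 0"
  unfolding tmean_def F1_def by (simp add: v1z)

lemma F2_tmean: "tmean (F2 k) = 0"
proof -
  have PU: "prob_space unif" by (rule prob_space_unif)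
  have "tmean (F2 k) = (\<integral>a. (\<integral>b. v2 (tt k) (a + v1 (tt k) b * dt) \<partial>unif) \<partial>unif)"
    unfolding tmean_def F2_def Yf_def by simp
  also have "\<dots> = (\<integral>b. (\<integral>a. v2 (tt k) (a + v1 (tt k) b * dt) \<partial>unif) \<partial>unif)"
    by (rule swap_int[OF PU PU, where C=B]) (measurable, rule v2b)
  also have "\<dots> = (\<integral>b. (\<integral>a. v2 (tt k) a \<partial>unif) \<partial>unif)"
    by (rule int_cong, rule unif_shift[where C=B]) (auto simp: v2b v2p)
  also have "\<dots> = 0" by (simp add: v2z)
  finally show ?thesis .
qed

lemma fst_X: "fst (X n \<omega>) = fst X0 + dt * (\<Sum>k<n. F1 k (X k \<omega>)) + s * (\<Sum>k<n. \<xi>1 k \<omega>)"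
  by (induction n) (auto simp: X_Suc step_eq Yf_def F1_def algebra_simps X_def[of 0])

lemma snd_X: "snd (X n \<omega>) = snd X0 + dt * (\<Sum>k<n. F2 k (X k \<omega>)) + s * (\<Sum>k<n. \<xi>2 k \<omega>)"
  by (induction n) (auto simp: X_Suc step_eq Ef_def F2_def algebra_simps X_def[of 0])

end


lemma geom_bound:
  fixes r :: real assumes r: "0 \<le> r" "r < 1"
  shows "(\<Sum>j<n. r ^ (n - j)) \<le> 1 / (1 - r)"
proof -
  have "(\<Sum>j<n. r ^ (n - j)) = (\<Sum>i<n. r ^ (n - (n - Suc i)))"
    using sum.nat_diff_reindex[of "\<lambda>j. r ^ (n - j)" n] by simp
  also have "\<dots> = (\<Sum>i<n. r ^ (Suc i))"
    by (rule sum.cong) auto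
  also have "\<dots> \<le> (\<Sum>i<n. r ^ i)"
    by (rule sum_mono) (use r in \<open>auto intro: mult_left_le_one_le\<close>)
  also have "\<dots> = (1 - r ^ n) / (1 - r)" using r by (simp add: sum_gp_strict)
  also have "\<dots> \<le> 1 / (1 - r)" using r by (simp add: divide_right_mono)
  finally show ?thesis .
qed

lemma sq_le: fixes x c :: real shows "\<bar>x\<bar> \<le> c \<Longrightarrow> x\<^sup>2 \<le> c\<^sup>2"
proof -
  assume a: "\<bar>x\<bar> \<le> c"
  have "\<bar>x\<bar>\<^sup>2 \<le> c\<^sup>2" by (rule power_mono[OF a]) simp
  then show ?thesis by simp
qed

context schm begin

lemma PM: "prob_space M" by intro_locales

lemma intb: fixes f :: "'a \<Rightarrow> real" shows "f \<in> borel_measurable M \<Longrightarrow> (\<And>\<omega>. \<bar>f \<omega>\<bar> \<le> C) \<Longrightarrow> integrable M f"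
  by (rule integrable_const_bound[where B=C]) auto

lemma B0: "B \<ge> 0" using v1b[of 0 0] by simp

lemma drift_var:
  fixes Fk :: "nat \<Rightarrow> real \<times> real \<Rightarrow> real"
  assumes Fm[measurable]: "\<And>k. Fk k \<in> borel_measurable (borel \<Otimes>\<^sub>M borel)"
    and Fb: "\<And>k x. \<bar>Fk k x\<bar> \<le> B" and Fp: "\<And>k. per2 (Fk k)" and Ft: "\<And>k. tmean (Fk k) = 0"
  shows "(\<integral>\<omega>. (\<Sum>k<n. Fk k (X k \<omega>))\<^sup>2 \<partial>M) \<le> real n * (B\<^sup>2 + 2 * B\<^sup>2 / (1 - rho))"
proof (induction n)
  case 0
  then show ?case by simp
next
  case (Suc n)
  define D where "D = (\<lambda>\<omega>. \<Sum>k<n. Fk k (X k \<omega>))"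
  define f where "f = (\<lambda>\<omega>. Fk n (X n \<omega>))"
  have Dm[measurable]: "D \<in> borel_measurable M" unfolding D_def by measurable
  have fm[measurable]: "f \<in> borel_measurable M" unfolding f_def by measurable
  have Db: "\<bar>D \<omega>\<bar> \<le> real n * B" for \<omega>
  proof -
    have "\<bar>D \<omega>\<bar> \<le> (\<Sum>k<n. \<bar>Fk k (X k \<omega>)\<bar>)" unfolding D_def by (rule sum_abs)
    also have "\<dots> \<le> (\<Sum>k<n. B)" by (rule sum_mono) (rule Fb)
    finally show ?thesis by simp
  qed
  have fb: "\<bar>f \<omega>\<bar> \<le> B" for \<omega> unfolding f_def by (rule Fb)
  have iD2: "integrable M (\<lambda>\<omega>. (D \<omega>)\<^sup>2)"
    by (rule intb[where C="(real n * B)\<^sup>2"]) (measurable, use Db in \<open>simp add: sq_le\<close>)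
  have iDf: "integrable M (\<lambda>\<omega>. D \<omega> * f \<omega>)"
    by (rule intb[where C="real n * B * B"]) (measurable, use Db fb B0 in \<open>simp add: abs_mult mult_mono\<close>)
  have if2: "integrable M (\<lambda>\<omega>. (f \<omega>)\<^sup>2)"
    by (rule intb[where C="B\<^sup>2"]) (measurable, use fb in \<open>simp add: sq_le\<close>)
  have cross: "(\<integral>\<omega>. D \<omega> * f \<omega> \<partial>M) \<le> B\<^sup>2 / (1 - rho)"
  proof -
    have ij: "integrable M (\<lambda>\<omega>. Fk j (X j \<omega>) * f \<omega>)" for j
      by (rule intb[where C="B * B"]) (measurable, use Fb fb B0 in \<open>simp add: abs_mult mult_mono\<close>)
    have "(\<integral>\<omega>. D \<omega> * f \<omega> \<partial>M) = (\<integral>\<omega>. (\<Sum>j<n. Fk j (X j \<omega>) * f \<omega>) \<partial>M)"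
      unfolding D_def by (simp add: sum_distrib_right)
    also have "\<dots> = (\<Sum>j<n. (\<integral>\<omega>. Fk j (X j \<omega>) * f \<omega> \<partial>M))"
      by (rule Bochner_Integration.integral_sum[where f="\<lambda>j \<omega>. Fk j (X j \<omega>) * f \<omega>"]) (rule ij)
    also have "\<dots> \<le> (\<Sum>j<n. B * B * rho ^ (n - j))"
    proof (rule sum_mono)
      fix j assume "j \<in> {..<n}"
      then have "j + (n - j) = n" by simp
      then have "\<bar>\<integral>\<omega>. Fk j (X j \<omega>) * Fk n (X (j + (n - j)) \<omega>) \<partial>M\<bar> \<le> B * B * rho ^ (n - j)"
        using decay[where Phi="Fk j" and g="Fk n" and j=j and d="n-j", OF Fm Fb Fm Fb Fp Ft] by simp
      then show "(\<integral>\<omega>. Fk j (X j \<omega>) * f \<omega> \<partial>M) \<le> B * B * rho ^ (n - j)"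
        unfolding f_def using \<open>j + (n - j) = n\<close> by simp
    qed
    also have "\<dots> = B\<^sup>2 * (\<Sum>j<n. rho ^ (n - j))"
      by (simp add: sum_distrib_left power2_eq_square)
    also have "\<dots> \<le> B\<^sup>2 * (1 / (1 - rho))"
      by (rule mult_left_mono[OF geom_bound[OF rho_bounds]]) simp
    finally show ?thesis by simp
  qed
  have f2: "(\<integral>\<omega>. (f \<omega>)\<^sup>2 \<partial>M) \<le> B\<^sup>2"
  proof -
    have "(\<integral>\<omega>. (f \<omega>)\<^sup>2 \<partial>M) \<le> (\<integral>\<omega>. B\<^sup>2 \<partial>M)"
      by (rule integral_mono[OF if2]) (use fb in \<open>auto simp: sq_le\<close>)
    then show ?thesis by (simp add: prob_space)
  qed
  have "(\<integral>\<omega>. (\<Sum>k<Suc n. Fk k (X k \<omega>))\<^sup>2 \<partial>M) = (\<integral>\<omega>. (D \<omega>)\<^sup>2 + 2 * (D \<omega> * f \<omega>) + (f \<omega>)\<^sup>2 \<partial>M)"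
    by (rule int_cong) (simp add: D_def f_def power2_eq_square algebra_simps)
  also have "\<dots> = (\<integral>\<omega>. (D \<omega>)\<^sup>2 \<partial>M) + 2 * (\<integral>\<omega>. D \<omega> * f \<omega> \<partial>M) + (\<integral>\<omega>. (f \<omega>)\<^sup>2 \<partial>M)"
    using iD2 iDf if2 by simp
  also have "\<dots> \<le> real n * (B\<^sup>2 + 2 * B\<^sup>2 / (1 - rho)) + 2 * (B\<^sup>2 / (1 - rho)) + B\<^sup>2"
    using Suc.IH cross f2 unfolding D_def by linarith
  also have "\<dots> = real (Suc n) * (B\<^sup>2 + 2 * B\<^sup>2 / (1 - rho))"
    by (simp add: algebra_simps add_divide_distrib)
  finally show ?case .
qed

end


lemma (in prob_space) std_normal_facts:
  assumes D: "distributed M lborel Z std_normal_density"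
  shows "integrable M Z" "integrable M (\<lambda>\<omega>. (Z \<omega>)\<^sup>2)" "expectation Z = 0" "expectation (\<lambda>\<omega>. (Z \<omega>)\<^sup>2) = 1"
proof -
  show iZ: "integrable M Z"
    using distributed_integrable[OF D, of "\<lambda>x. x"] integrable_std_normal_moment[of 1] by simp
  show "integrable M (\<lambda>\<omega>. (Z \<omega>)\<^sup>2)"
    using distributed_integrable[OF D, of "\<lambda>x. x\<^sup>2"] integrable_std_normal_moment[of 2] by simp
  show E0: "expectation Z = 0" by (rule standard_normal_distributed_expectation[OF D])
  show "expectation (\<lambda>\<omega>. (Z \<omega>)\<^sup>2) = 1"
    using standard_normal_distributed_variance[OF D] E0 by simp
qed

context schm begin

lemma xi_dist: "distributed M lborel (xi a) std_normal_density"
  by (cases a) (auto simp: d1 d2)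

lemma xi_meas[measurable]: "xi a \<in> borel_measurable M"
  using xi_dist[of a] by (auto simp: distributed_def)

lemma indep_xi: "a \<noteq> b \<Longrightarrow> indep_var borel (xi a) borel (xi b)"
proof -
  assume ab: "a \<noteq> b"
  have "indep_var (PiM {a} (\<lambda>_. borel)) (\<lambda>\<omega>. restrict (\<lambda>i. xi i \<omega>) {a})
                  (PiM {b} (\<lambda>_. borel)) (\<lambda>\<omega>. restrict (\<lambda>i. xi i \<omega>) {b})"
    by (rule indep_var_restrict[OF indep']) (use ab in auto)
  then have "indep_var borel ((\<lambda>r. r a) \<circ> (\<lambda>\<omega>. restrict (\<lambda>i. xi i \<omega>) {a}))
                  borel ((\<lambda>r. r b) \<circ> (\<lambda>\<omega>. restrict (\<lambda>i. xi i \<omega>) {b}))"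
    by (rule indep_var_compose) measurable
  moreover have "(\<lambda>r. r a) \<circ> (\<lambda>\<omega>. restrict (\<lambda>i. xi i \<omega>) {a}) = xi a" by (auto simp: fun_eq_iff)
  moreover have "(\<lambda>r. r b) \<circ> (\<lambda>\<omega>. restrict (\<lambda>i. xi i \<omega>) {b}) = xi b" by (auto simp: fun_eq_iff)
  ultimately show ?thesis by simp
qed

lemma xi_prod_int: "integrable M (\<lambda>\<omega>. xi a \<omega> * xi b \<omega>)"
proof (rule Bochner_Integration.integrable_bound[where f="\<lambda>\<omega>. (xi a \<omega>)\<^sup>2 + (xi b \<omega>)\<^sup>2"])
  show "integrable M (\<lambda>\<omega>. (xi a \<omega>)\<^sup>2 + (xi b \<omega>)\<^sup>2)"
    using std_normal_facts(2)[OF xi_dist[of a]] std_normal_facts(2)[OF xi_dist[of b]] by simp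
  show "(\<lambda>\<omega>. xi a \<omega> * xi b \<omega>) \<in> borel_measurable M" by measurable
  show "AE \<omega> in M. norm (xi a \<omega> * xi b \<omega>) \<le> norm ((xi a \<omega>)\<^sup>2 + (xi b \<omega>)\<^sup>2)"
  proof (rule AE_I2)
    fix \<omega>
    have "\<bar>xi a \<omega> * xi b \<omega>\<bar> \<le> (xi a \<omega>)\<^sup>2 + (xi b \<omega>)\<^sup>2"
      using sum_squares_bound[of "xi a \<omega>" "xi b \<omega>"] sum_squares_bound[of "xi a \<omega>" "- xi b \<omega>"]
      by (simp add: abs_if)
    then show "norm (xi a \<omega> * xi b \<omega>) \<le> norm ((xi a \<omega>)\<^sup>2 + (xi b \<omega>)\<^sup>2)" by simp
  qed
qed

lemma xi_prod_exp: "expectation (\<lambda>\<omega>. xi a \<omega> * xi b \<omega>) = (if a = b then 1 else 0)"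
proof (cases "a = b")
  case True
  then show ?thesis using std_normal_facts(4)[OF xi_dist[of a]] by (simp add: power2_eq_square)
next
  case False
  have "expectation (\<lambda>\<omega>. xi a \<omega> * xi b \<omega>) = expectation (xi a) * expectation (xi b)"
    by (rule indep_var_lebesgue_integral[OF indep_xi[OF False] std_normal_facts(1)[OF xi_dist] std_normal_facts(1)[OF xi_dist]])
  then show ?thesis using False std_normal_facts(3)[OF xi_dist[of a]] by simp
qed

lemma noise_var:
  assumes inj: "inj (\<iota> :: nat \<Rightarrow> nat + nat)"
  shows "expectation (\<lambda>\<omega>. (\<Sum>k<n. xi (\<iota> k) \<omega>)\<^sup>2) = real n"
proof -
  have "expectation (\<lambda>\<omega>. (\<Sum>k<n. xi (\<iota> k) \<omega>)\<^sup>2) = expectation (\<lambda>\<omega>. \<Sum>j<n. \<Sum>k<n. xi (\<iota> j) \<omega> * xi (\<iota> k) \<omega>)"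
    by (simp add: power2_eq_square sum_product)
  also have "\<dots> = (\<Sum>j<n. expectation (\<lambda>\<omega>. \<Sum>k<n. xi (\<iota> j) \<omega> * xi (\<iota> k) \<omega>))"
    by (rule Bochner_Integration.integral_sum) (auto intro!: xi_prod_int)
  also have "\<dots> = (\<Sum>j<n. \<Sum>k<n. expectation (\<lambda>\<omega>. xi (\<iota> j) \<omega> * xi (\<iota> k) \<omega>))"
    by (rule sum.cong[OF refl], rule Bochner_Integration.integral_sum) (auto intro!: xi_prod_int)
  also have "\<dots> = (\<Sum>j<n. \<Sum>k<n. if j = k then 1 else 0)"
    using inj by (simp add: xi_prod_exp inj_eq)
  also have "\<dots> = real n" by simp
  finally show ?thesis .
qed

lemma noise_int: "integrable M (\<lambda>\<omega>. (\<Sum>k<n. xi (\<iota> k) \<omega>)\<^sup>2)"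
  by (simp add: power2_eq_square sum_product xi_prod_int)

end


lemma three_sq: fixes a b c :: real shows "(a + b + c)\<^sup>2 \<le> 3 * (a\<^sup>2 + b\<^sup>2 + c\<^sup>2)"
proof -
  have "0 \<le> (a - b)\<^sup>2 + (a - c)\<^sup>2 + (b - c)\<^sup>2" by simp
  then show ?thesis by (simp add: power2_eq_square algebra_simps)
qed

context schm begin

lemma coord:
  fixes D S :: "'a \<Rightarrow> real"
  assumes [measurable]: "D \<in> borel_measurable M" "S \<in> borel_measurable M"
    and iD: "integrable M (\<lambda>\<omega>. (D \<omega>)\<^sup>2)" and iS: "integrable M (\<lambda>\<omega>. (S \<omega>)\<^sup>2)"
  shows "integrable M (\<lambda>\<omega>. (c + dt * D \<omega> + s * S \<omega>)\<^sup>2)"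
    and "expectation (\<lambda>\<omega>. (c + dt * D \<omega> + s * S \<omega>)\<^sup>2)
          \<le> 3 * (c\<^sup>2 + dt\<^sup>2 * expectation (\<lambda>\<omega>. (D \<omega>)\<^sup>2) + s\<^sup>2 * expectation (\<lambda>\<omega>. (S \<omega>)\<^sup>2))"
proof -
  have iR: "integrable M (\<lambda>\<omega>. 3 * (c\<^sup>2 + dt\<^sup>2 * (D \<omega>)\<^sup>2 + s\<^sup>2 * (S \<omega>)\<^sup>2))"
    using iD iS by simp
  have pw: "(c + dt * D \<omega> + s * S \<omega>)\<^sup>2 \<le> 3 * (c\<^sup>2 + dt\<^sup>2 * (D \<omega>)\<^sup>2 + s\<^sup>2 * (S \<omega>)\<^sup>2)" for \<omega>
    using three_sq[of c "dt * D \<omega>" "s * S \<omega>"] by (simp add: power_mult_distrib)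
  show iL: "integrable M (\<lambda>\<omega>. (c + dt * D \<omega> + s * S \<omega>)\<^sup>2)"
    by (rule Bochner_Integration.integrable_bound[OF iR]) (measurable, use pw in \<open>auto intro: order_trans[OF _ abs_ge_self]\<close>)
  have "expectation (\<lambda>\<omega>. (c + dt * D \<omega> + s * S \<omega>)\<^sup>2) \<le> expectation (\<lambda>\<omega>. 3 * (c\<^sup>2 + dt\<^sup>2 * (D \<omega>)\<^sup>2 + s\<^sup>2 * (S \<omega>)\<^sup>2))"
    by (rule integral_mono[OF iL iR pw])
  also have "\<dots> = 3 * (c\<^sup>2 + dt\<^sup>2 * expectation (\<lambda>\<omega>. (D \<omega>)\<^sup>2) + s\<^sup>2 * expectation (\<lambda>\<omega>. (S \<omega>)\<^sup>2))"
    using iD iS by (simp add: prob_space)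
  finally show "expectation (\<lambda>\<omega>. (c + dt * D \<omega> + s * S \<omega>)\<^sup>2)
          \<le> 3 * (c\<^sup>2 + dt\<^sup>2 * expectation (\<lambda>\<omega>. (D \<omega>)\<^sup>2) + s\<^sup>2 * expectation (\<lambda>\<omega>. (S \<omega>)\<^sup>2))" .
qed

definition "KK = B\<^sup>2 + 2 * B\<^sup>2 / (1 - rho)"

lemma drift_int:
  fixes Fk :: "nat \<Rightarrow> real \<times> real \<Rightarrow> real"
  assumes Fm[measurable]: "\<And>k. Fk k \<in> borel_measurable (borel \<Otimes>\<^sub>M borel)" and Fb: "\<And>k x. \<bar>Fk k x\<bar> \<le> B"
  shows "integrable M (\<lambda>\<omega>. (\<Sum>k<n. Fk k (X k \<omega>))\<^sup>2)"
proof (rule intb[where C="(real n * B)\<^sup>2"])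
  show "(\<lambda>\<omega>. (\<Sum>k<n. Fk k (X k \<omega>))\<^sup>2) \<in> borel_measurable M" by measurable
  fix \<omega>
  have "\<bar>\<Sum>k<n. Fk k (X k \<omega>)\<bar> \<le> (\<Sum>k<n. \<bar>Fk k (X k \<omega>)\<bar>)" by (rule sum_abs)
  also have "\<dots> \<le> (\<Sum>k<n. B)" by (rule sum_mono) (rule Fb)
  finally show "\<bar>(\<Sum>k<n. Fk k (X k \<omega>))\<^sup>2\<bar> \<le> (real n * B)\<^sup>2" by (simp add: sq_le)
qed

lemma coord_final:
  fixes Fk :: "nat \<Rightarrow> real \<times> real \<Rightarrow> real" and \<iota> :: "nat \<Rightarrow> nat + nat"
  assumes Fm[measurable]: "\<And>k. Fk k \<in> borel_measurable (borel \<Otimes>\<^sub>M borel)"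
    and Fb: "\<And>k x. \<bar>Fk k x\<bar> \<le> B" and Fp: "\<And>k. per2 (Fk k)" and Ft: "\<And>k. tmean (Fk k) = 0"
    and inj: "inj \<iota>"
  shows "integrable M (\<lambda>\<omega>. (c + dt * (\<Sum>k<n. Fk k (X k \<omega>)) + s * (\<Sum>k<n. xi (\<iota> k) \<omega>))\<^sup>2)"
    and "expectation (\<lambda>\<omega>. (c + dt * (\<Sum>k<n. Fk k (X k \<omega>)) + s * (\<Sum>k<n. xi (\<iota> k) \<omega>))\<^sup>2)
          \<le> 3 * (c\<^sup>2 + dt\<^sup>2 * (real n * KK) + s\<^sup>2 * real n)"
proof -
  have m1[measurable]: "(\<lambda>\<omega>. \<Sum>k<n. Fk k (X k \<omega>)) \<in> borel_measurable M" by measurable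
  have m2[measurable]: "(\<lambda>\<omega>. \<Sum>k<n. xi (\<iota> k) \<omega>) \<in> borel_measurable M" by measurable
  note c = coord[where c=c, OF m1 m2 drift_int[where Fk=Fk, OF Fm Fb] noise_int]
  show "integrable M (\<lambda>\<omega>. (c + dt * (\<Sum>k<n. Fk k (X k \<omega>)) + s * (\<Sum>k<n. xi (\<iota> k) \<omega>))\<^sup>2)" by (rule c(1))
  have "dt\<^sup>2 * expectation (\<lambda>\<omega>. (\<Sum>k<n. Fk k (X k \<omega>))\<^sup>2) \<le> dt\<^sup>2 * (real n * KK)"
    using drift_var[where Fk=Fk and n=n, OF Fm Fb Fp Ft] by (intro mult_left_mono) (auto simp: KK_def)
  then show "expectation (\<lambda>\<omega>. (c + dt * (\<Sum>k<n. Fk k (X k \<omega>)) + s * (\<Sum>k<n. xi (\<iota> k) \<omega>))\<^sup>2)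
          \<le> 3 * (c\<^sup>2 + dt\<^sup>2 * (real n * KK) + s\<^sup>2 * real n)"
  proof -
    have "s\<^sup>2 * expectation (\<lambda>\<omega>. (\<Sum>k<n. xi (\<iota> k) \<omega>)\<^sup>2) = s\<^sup>2 * real n"
      by (simp add: noise_var[where n=n, OF inj])
    show ?thesis using \<open>dt\<^sup>2 * _ \<le> _\<close> by (intro order_trans[OF c(2)]) (simp add: noise_var[where n=n, OF inj])
  qed
qed

lemma KK0: "KK \<ge> 0"
  unfolding KK_def using rho_bounds by simp

theorem main_loc:
  "(\<forall>n. integrable M (\<lambda>\<omega>. (norm (X n \<omega>))\<^sup>2))
    \<and> bdd_above ((\<lambda>n. expectation (\<lambda>\<omega>. (norm (X n \<omega>))\<^sup>2) / real n) ` {1..})"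
proof -
  define c1 where "c1 = fst X0"
  define c2 where "c2 = snd X0"
  have nrm: "(norm (X n \<omega>))\<^sup>2 = (c1 + dt * (\<Sum>k<n. F1 k (X k \<omega>)) + s * (\<Sum>k<n. xi (Inl k) \<omega>))\<^sup>2
      + (c2 + dt * (\<Sum>k<n. F2 k (X k \<omega>)) + s * (\<Sum>k<n. xi (Inr k) \<omega>))\<^sup>2" for n \<omega>
  proof -
    have "(norm (X n \<omega>))\<^sup>2 = (fst (X n \<omega>))\<^sup>2 + (snd (X n \<omega>))\<^sup>2"
      by (cases "X n \<omega>") (simp add: norm_Pair)
    then show ?thesis by (simp add: fst_X snd_X c1_def c2_def)
  qed
  have injl: "inj (Inl :: nat \<Rightarrow> nat + nat)" and injr: "inj (Inr :: nat \<Rightarrow> nat + nat)" by (auto simp: inj_def)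
  note A = coord_final[where c=c1 and Fk=F1, OF F1_meas F1_b F1_per F1_tmean injl]
  note Bb = coord_final[where c=c2 and Fk=F2, OF F2_meas F2_b F2_per F2_tmean injr]
  have int: "integrable M (\<lambda>\<omega>. (norm (X n \<omega>))\<^sup>2)" for n
    unfolding nrm using A(1)[where n=n] Bb(1)[where n=n] by simp
  have E: "expectation (\<lambda>\<omega>. (norm (X n \<omega>))\<^sup>2)
      \<le> 3 * (c1\<^sup>2 + dt\<^sup>2 * (real n * KK) + s\<^sup>2 * real n) + 3 * (c2\<^sup>2 + dt\<^sup>2 * (real n * KK) + s\<^sup>2 * real n)" for n
    unfolding nrm using Bochner_Integration.integral_add[OF A(1)[where n=n] Bb(1)[where n=n]] A(2)[where n=n] Bb(2)[where n=n] by linarith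
  define Cst where "Cst = 3 * (c1\<^sup>2 + c2\<^sup>2) + 6 * (dt\<^sup>2 * KK + s\<^sup>2)"
  have "expectation (\<lambda>\<omega>. (norm (X n \<omega>))\<^sup>2) / real n \<le> Cst" if "n \<in> {1..}" for n
  proof -
    have n1: "real n \<ge> 1" using that by simp
    have "expectation (\<lambda>\<omega>. (norm (X n \<omega>))\<^sup>2) \<le> 3 * (c1\<^sup>2 + c2\<^sup>2) + real n * (6 * (dt\<^sup>2 * KK + s\<^sup>2))"
      using E[of n] by (simp add: algebra_simps)
    also have "\<dots> \<le> real n * (3 * (c1\<^sup>2 + c2\<^sup>2)) + real n * (6 * (dt\<^sup>2 * KK + s\<^sup>2))"
      using mult_right_mono[OF n1, of "3 * (c1\<^sup>2 + c2\<^sup>2)"] by simp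
    also have "\<dots> = real n * Cst" by (simp add: Cst_def algebra_simps)
    finally show ?thesis using n1 by (simp add: divide_le_eq mult.commute)
  qed
  then have "bdd_above ((\<lambda>n. expectation (\<lambda>\<omega>. (norm (X n \<omega>))\<^sup>2) / real n) ` {1..})"
    by (intro bdd_aboveI2) auto
  with int show ?thesis by blast
qed

end


lemma smooth_facts:
  assumes sm: "smooth2 H" and pt: "\<And>t x. H (t+1) x = H t x" and px: "\<And>t x. H t (x+1) = H t x"
  shows "\<exists>E. (\<forall>t x. deriv (H t) x = E t x) \<and> continuous_on UNIV (\<lambda>p. E (fst p) (snd p))
            \<and> (\<forall>t x. E (t+1) x = E t x) \<and> (\<forall>t x. E t (x+1) = E t x)"
proof -
  obtain D :: "nat \<Rightarrow> nat \<Rightarrow> real \<Rightarrow> real \<Rightarrow> real" where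
    D0: "D 0 0 = H" and Dc: "\<And>i j. continuous_on UNIV (\<lambda>p. D i j (fst p) (snd p))"
    and Dx: "\<And>i j t x. ((\<lambda>y. D i j t y) has_real_derivative D i (Suc j) t x) (at x)"
    using sm unfolding smooth2_def by blast
  define E where "E = D 0 1"
  have der: "(H t has_real_derivative E t x) (at x)" for t x
    using Dx[of 0 0 t x] unfolding D0 E_def by (simp add: One_nat_def)
  have "deriv (H t) x = E t x" for t x by (rule DERIV_imp_deriv[OF der])
  moreover have "continuous_on UNIV (\<lambda>p. E (fst p) (snd p))" unfolding E_def by (rule Dc)
  moreover have "E (t+1) x = E t x" for t x
  proof -
    have "H (t+1) = H t" using pt by auto
    then show ?thesis using DERIV_unique[OF der[of "t+1" x]] der[of t x] by simp
  qed
  moreover have "E t (x+1) = E t x" for t x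
  proof -
    have "((\<lambda>y. H t (y + 1)) has_real_derivative E t (x+1)) (at x)"
      using der[of t "x+1"] by (simp add: DERIV_shift)
    moreover have "(\<lambda>y. H t (y + 1)) = H t" using px by auto
    ultimately show ?thesis using DERIV_unique der[of t x] by metis
  qed
  ultimately show ?thesis by blast
qed

lemma bounded_per:
  fixes E :: "real \<Rightarrow> real \<Rightarrow> real"
  assumes c: "continuous_on UNIV (\<lambda>p. E (fst p) (snd p))"
    and pt: "\<And>t x. E (t+1) x = E t x" and px: "\<And>t x. E t (x+1) = E t x"
  shows "\<exists>B. \<forall>t x. \<bar>E t x\<bar> \<le> B"
proof -
  define K where "K = {0..1::real} \<times> {0..1::real}"
  have "compact K" unfolding K_def by (intro compact_Times compact_Icc)
  moreover have "continuous_on K (\<lambda>p. E (fst p) (snd p))" using c by (rule continuous_on_subset) simp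
  ultimately have "compact ((\<lambda>p. E (fst p) (snd p)) ` K)" by (simp add: compact_continuous_image)
  then have "bounded ((\<lambda>p. E (fst p) (snd p)) ` K)" by (rule compact_imp_bounded)
  then obtain B where B: "\<And>y. y \<in> (\<lambda>p. E (fst p) (snd p)) ` K \<Longrightarrow> norm y \<le> B" by (auto simp: bounded_iff)
  have "\<bar>E t x\<bar> \<le> B" for t x
  proof -
    have e1: "E t x = E (t - of_int \<lfloor>t\<rfloor>) x"
      using per_int_shift[of "\<lambda>t. E t x", OF pt, of "t - of_int \<lfloor>t\<rfloor>" "\<lfloor>t\<rfloor>"] by simp
    have e2: "E (t - of_int \<lfloor>t\<rfloor>) x = E (t - of_int \<lfloor>t\<rfloor>) (x - of_int \<lfloor>x\<rfloor>)"
      using per_int_shift[of "\<lambda>x. E (t - of_int \<lfloor>t\<rfloor>) x", OF px, of "x - of_int \<lfloor>x\<rfloor>" "\<lfloor>x\<rfloor>"] by simp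
    have "(t - of_int \<lfloor>t\<rfloor>, x - of_int \<lfloor>x\<rfloor>) \<in> K" unfolding K_def
      by (auto simp: frac_lt_1[unfolded frac_def] less_imp_le)
    then have "norm (E (t - of_int \<lfloor>t\<rfloor>) (x - of_int \<lfloor>x\<rfloor>)) \<le> B"
      by (intro B) (auto intro: image_eqI[where x="(t - of_int \<lfloor>t\<rfloor>, x - of_int \<lfloor>x\<rfloor>)"])
    then show ?thesis using e1 e2 by simp
  qed
  then show ?thesis by blast
qed

lemma cont_slice:
  assumes "continuous_on UNIV (\<lambda>p. E (fst p) (snd p))"
  shows "continuous_on UNIV (E t)"
proof -
  have "continuous_on UNIV ((\<lambda>p. E (fst p) (snd p)) \<circ> (\<lambda>x. (t, x)))"
    by (rule continuous_on_compose) (auto intro: continuous_intros continuous_on_subset[OF assms])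
  then show ?thesis by (simp add: comp_def)
qed

lemma unif_HK:
  fixes f :: "real \<Rightarrow> real"
  assumes c: "continuous_on UNIV f"
  shows "(\<integral>x. f x \<partial>unif) = integral {0..1} f"
proof -
  have fm[measurable]: "f \<in> borel_measurable borel" using c by (rule borel_measurable_continuous_onI)
  have "(\<integral>x. f x \<partial>unif) = (\<integral>x. indicator {0..<1} x * f x \<partial>lborel)" by (rule integral_unif[OF fm])
  also have "\<dots> = (\<integral>x. indicator {0..1} x *\<^sub>R f x \<partial>lborel)"
  proof (rule integral_cong_AE)
    show "AE x in lborel. indicator {0..<1} x * f x = indicator {0..1} x *\<^sub>R f x"
      using AE_lborel_singleton[of 1] by eventually_elim (auto simp: indicator_def)
  qed auto
  also have "\<dots> = (LINT x:{0..1}|lborel. f x)" by (simp add: set_lebesgue_integral_def)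
  also have "\<dots> = integral {0..1} f"
    by (rule set_borel_integral_eq_integral(2)[OF borel_integrable_atLeastAtMost'])
       (rule continuous_on_subset[OF c], simp)
  finally show ?thesis .
qed


theorem theorem4p5:
  fixes M :: "'a measure"
    and H1 H2 :: "real \<Rightarrow> real \<Rightarrow> real"
    and v1 v2 :: "real \<Rightarrow> real \<Rightarrow> real"
    and \<sigma> :: real and N :: nat and X0 :: "real \<times> real"
    and \<xi>1 \<xi>2 :: "nat \<Rightarrow> 'a \<Rightarrow> real"
  assumes "prob_space M"
    and "\<sigma> > 0" and "N \<ge> 1"
    and "smooth2 H1" and "smooth2 H2"
    and "\<And>t x. H1 (t + 1) x = H1 t x" and "\<And>t x. H1 t (x + 1) = H1 t x"
    and "\<And>t x. H2 (t + 1) x = H2 t x" and "\<And>t x. H2 t (x + 1) = H2 t x"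
    and "\<And>t x2. v1 t x2 = - deriv (H2 t) x2"
    and "\<And>t x1. v2 t x1 = deriv (H1 t) x1"
    and "\<And>t. integral {0..1} (v1 t) = 0"
    and "\<And>t. integral {0..1} (v2 t) = 0"
    and "prob_space.indep_vars M (\<lambda>_. borel) (\<lambda>k. case k of Inl n \<Rightarrow> \<xi>1 n | Inr n \<Rightarrow> \<xi>2 n) UNIV"
    and "\<And>n. distributed M lborel (\<xi>1 n) std_normal_density"
    and "\<And>n. distributed M lborel (\<xi>2 n) std_normal_density"
  shows "(\<forall>n. integrable M (\<lambda>\<omega>. (norm (scheme v1 v2 \<sigma> N X0 (\<lambda>k. \<xi>1 k \<omega>) (\<lambda>k. \<xi>2 k \<omega>) n))\<^sup>2))
    \<and> bdd_above ((\<lambda>n. prob_space.expectation M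
          (\<lambda>\<omega>. (norm (scheme v1 v2 \<sigma> N X0 (\<lambda>k. \<xi>1 k \<omega>) (\<lambda>k. \<xi>2 k \<omega>) n))\<^sup>2) / real n) ` {1..})"
proof -
  note a = assms
  obtain E1 where E1d: "\<And>t x. deriv (H1 t) x = E1 t x" and E1c: "continuous_on UNIV (\<lambda>p. E1 (fst p) (snd p))"
    and E1t: "\<And>t x. E1 (t+1) x = E1 t x" and E1x: "\<And>t x. E1 t (x+1) = E1 t x"
    using smooth_facts[OF a(4) a(6) a(7)] by blast
  obtain E2 where E2d: "\<And>t x. deriv (H2 t) x = E2 t x" and E2c: "continuous_on UNIV (\<lambda>p. E2 (fst p) (snd p))"
    and E2t: "\<And>t x. E2 (t+1) x = E2 t x" and E2x: "\<And>t x. E2 t (x+1) = E2 t x"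
    using smooth_facts[OF a(5) a(8) a(9)] by blast
  have v1e: "v1 t x = - E2 t x" for t x using a(10) E2d by simp
  have v2e: "v2 t x = E1 t x" for t x using a(11) E1d by simp
  obtain B1 where B1: "\<And>t x. \<bar>E1 t x\<bar> \<le> B1" using bounded_per[OF E1c E1t E1x] by blast
  obtain B2 where B2: "\<And>t x. \<bar>E2 t x\<bar> \<le> B2" using bounded_per[OF E2c E2t E2x] by blast
  define B where "B = max B1 B2"
  have c1: "continuous_on UNIV (v1 t)" for t
  proof -
    have "v1 t = (\<lambda>x. - E2 t x)" using v1e by auto
    then show ?thesis using cont_slice[OF E2c, of t] by (simp add: continuous_on_minus)
  qed
  have c2: "continuous_on UNIV (v2 t)" for t
  proof -
    have "v2 t = E1 t" using v2e by auto
    then show ?thesis using cont_slice[OF E1c, of t] by simp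
  qed
  interpret S: schm M v1 v2 \<sigma> N X0 \<xi>1 \<xi>2 B
  proof (rule schm.intro[OF a(1)], rule schm_axioms.intro)
    show "\<sigma> > 0" "N \<ge> 1" by (fact a(2), fact a(3))
    show "\<And>t. v1 t \<in> borel_measurable borel" "\<And>t. v2 t \<in> borel_measurable borel"
      using c1 c2 by (auto intro: borel_measurable_continuous_onI)
    show "\<And>t x. \<bar>v1 t x\<bar> \<le> B" using B2 by (simp add: v1e B_def le_max_iff_disj)
    show "\<And>t x. \<bar>v2 t x\<bar> \<le> B" using B1 by (simp add: v2e B_def le_max_iff_disj)
    show "\<And>t x. v1 t (x + 1) = v1 t x" by (simp add: v1e E2x)
    show "\<And>t x. v2 t (x + 1) = v2 t x" by (simp add: v2e E1x)
    show "\<And>t. (\<integral>x. v1 t x \<partial>unif) = 0" using unif_HK[OF c1] a(12) by simp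
    show "\<And>t. (\<integral>x. v2 t x \<partial>unif) = 0" using unif_HK[OF c2] a(13) by simp
    show "prob_space.indep_vars M (\<lambda>_. borel) (\<lambda>k. case k of Inl n \<Rightarrow> \<xi>1 n | Inr n \<Rightarrow> \<xi>2 n) UNIV" by (fact a(14))
    show "\<And>n. distributed M lborel (\<xi>1 n) std_normal_density" by (fact a(15))
    show "\<And>n. distributed M lborel (\<xi>2 n) std_normal_density" by (fact a(16))
  qed
  show ?thesis using S.main_loc unfolding S.X_def .
qed


end
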